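(* Let $\mathcal G=\{U_a\}_{a=1}^{|\mathcal G|}$ be a finite group of unitary operators on a finite-dimensional Hilbert space $\mathcal H_A$, let $\Delta(\rho)=\frac{1}{|\mathcal G|}\sum_{a=1}^{|\mathcal G|}U_a\rho U_a^\dagger$ be the $\mathcal G$-twirling map, and let $\mathcal F(A)=\{\Delta(\rho):\rho\in\mathcal D(\mathcal H_A)\}$. Then $\mathcal F(A)$ is affine, $\Delta$ is a resource-destroying map for $\mathcal F(A)$, and for every $N\ge1$, with $\mathcal F(A_1\dots A_N)=\mathrm{Aff}(\mathcal F(A)^{\otimes N})$, there is no $\rho\in\mathcal D(\mathcal H_A^{\otimes N})$ with $\rho\notin\mathcal F(A_1\dots A_N)$ and $\Delta^{\otimes N}(\rho)=\rho$.
   Context: $\mathcal D(\mathcal H)$ denotes the density operators on $\mathcal H$. For $S\subseteq\mathcal D(\mathcal H)$, $\mathrm{Aff}(S)=\{\sum_a t_a\sigma_a:\ \text{finitely many }\sigma_a\in S,\ t_a\in\mathbb R,\ \sum_a t_a=1\}\cap\mathcal D(\mathcal H)$; $S$ is affine if $\mathrm{Aff}(S)=S$; $S^{\otimes N}=\{\rho_1\otimes\dots\otimes\rho_N:\rho_a\in S\}$. A resource-destroying map for $\mathcal F(A)$ is a completely positive trace-preserving linear map $\Delta$ with $\Delta(\rho)\in\mathcal F(A)$ for all $\rho\in\mathcal D(\mathcal H_A)$ and $\Delta(\sigma)=\sigma$ for all $\sigma\in\mathcal F(A)$. *)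

theory Defs
  imports "Jordan_Normal_Form.Matrix" Complex_Main
begin

(* Conventions: a Hilbert space of dimension d is C^d; operators on it are
   complex d x d matrices (JNF type complex mat with carrier_mat d d). *)

definition dag :: "complex mat \<Rightarrow> complex mat" where
  "dag A = mat (dim_col A) (dim_row A) (\<lambda>(i,j). cnj (A $$ (j,i)))"

definition tr :: "complex mat \<Rightarrow> complex" where
  "tr A = (\<Sum>i<dim_row A. A $$ (i,i))"

definition unitary :: "nat \<Rightarrow> complex mat \<Rightarrow> bool" where
  "unitary d U \<longleftrightarrow> U \<in> carrier_mat d d \<and> U * dag U = 1\<^sub>m d \<and> dag U * U = 1\<^sub>m d"

definition psd :: "nat \<Rightarrow> complex mat \<Rightarrow> bool" where
  "psd d A \<longleftrightarrow> A \<in> carrier_mat d d \<and> dag A = A \<and>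
     (\<forall>v \<in> carrier_vec d. 0 \<le> Re (conjugate v \<bullet> (A *\<^sub>v v)))"

definition density_ops :: "nat \<Rightarrow> complex mat set" where
  "density_ops d = {\<rho>. psd d \<rho> \<and> tr \<rho> = 1}"

definition Aff :: "nat \<Rightarrow> complex mat set \<Rightarrow> complex mat set" where
  "Aff d S = {\<rho> \<in> density_ops d. \<exists>A t. finite A \<and> A \<subseteq> S \<and> (\<Sum>\<sigma>\<in>A. t \<sigma>) = (1::real) \<and>
       \<rho> = mat d d (\<lambda>ij. \<Sum>\<sigma>\<in>A. complex_of_real (t \<sigma>) * \<sigma> $$ ij)}"

definition affine_set :: "nat \<Rightarrow> complex mat set \<Rightarrow> bool" where
  "affine_set d S \<longleftrightarrow> Aff d S = S"

definition kron :: "complex mat \<Rightarrow> complex mat \<Rightarrow> complex mat" where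
  "kron A B = mat (dim_row A * dim_row B) (dim_col A * dim_col B)
     (\<lambda>(i,j). A $$ (i div dim_row B, j div dim_col B) * B $$ (i mod dim_row B, j mod dim_col B))"

fun kron_list :: "complex mat list \<Rightarrow> complex mat" where
  "kron_list [] = 1\<^sub>m 1"
| "kron_list (A # As) = kron A (kron_list As)"

definition tensor_pow :: "nat \<Rightarrow> complex mat set \<Rightarrow> complex mat set" where
  "tensor_pow N S = {kron_list \<rho>s | \<rho>s. length \<rho>s = N \<and> set \<rho>s \<subseteq> S}"

definition linear_map :: "nat \<Rightarrow> (complex mat \<Rightarrow> complex mat) \<Rightarrow> bool" where
  "linear_map d \<Phi> \<longleftrightarrow>
     (\<forall>A \<in> carrier_mat d d. \<Phi> A \<in> carrier_mat d d) \<and>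
     (\<forall>A \<in> carrier_mat d d. \<forall>B \<in> carrier_mat d d. \<Phi> (A + B) = \<Phi> A + \<Phi> B) \<and>
     (\<forall>A \<in> carrier_mat d d. \<forall>c. \<Phi> (c \<cdot>\<^sub>m A) = c \<cdot>\<^sub>m \<Phi> A)"

(* id_k \<otimes> \<Phi>, acting on (k*d) x (k*d) matrices viewed as k x k blocks of d x d matrices *)
definition block :: "nat \<Rightarrow> complex mat \<Rightarrow> nat \<Rightarrow> nat \<Rightarrow> complex mat" where
  "block d X a b = mat d d (\<lambda>(p,q). X $$ (a*d + p, b*d + q))"

definition id_tensor :: "nat \<Rightarrow> nat \<Rightarrow> (complex mat \<Rightarrow> complex mat) \<Rightarrow> complex mat \<Rightarrow> complex mat" where
  "id_tensor k d \<Phi> X = mat (k*d) (k*d)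
     (\<lambda>(i,j). \<Phi> (block d X (i div d) (j div d)) $$ (i mod d, j mod d))"

definition CPTP :: "nat \<Rightarrow> (complex mat \<Rightarrow> complex mat) \<Rightarrow> bool" where
  "CPTP d \<Phi> \<longleftrightarrow> linear_map d \<Phi> \<and>
     (\<forall>k X. psd (k*d) X \<longrightarrow> psd (k*d) (id_tensor k d \<Phi> X)) \<and>
     (\<forall>A \<in> carrier_mat d d. tr (\<Phi> A) = tr A)"

definition resource_destroying :: "nat \<Rightarrow> complex mat set \<Rightarrow> (complex mat \<Rightarrow> complex mat) \<Rightarrow> bool" where
  "resource_destroying d F \<Delta> \<longleftrightarrow> CPTP d \<Delta> \<and>
     (\<forall>\<rho> \<in> density_ops d. \<Delta> \<rho> \<in> F) \<and> (\<forall>\<sigma> \<in> F. \<Delta> \<sigma> = \<sigma>)"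

definition twirl :: "nat \<Rightarrow> complex mat set \<Rightarrow> complex mat \<Rightarrow> complex mat" where
  "twirl d G \<rho> = mat d d (\<lambda>ij. (1 / of_nat (card G)) * (\<Sum>U\<in>G. (U * \<rho> * dag U) $$ ij))"

definition twirl_tensor :: "nat \<Rightarrow> complex mat set \<Rightarrow> nat \<Rightarrow> complex mat \<Rightarrow> complex mat" where
  "twirl_tensor d G N \<rho> = mat (d^N) (d^N) (\<lambda>ij. (1 / of_nat (card G ^ N)) *
     (\<Sum>Us \<in> {Us. length Us = N \<and> set Us \<subseteq> G}. (kron_list Us * \<rho> * dag (kron_list Us)) $$ ij))"

end

theory Submission imports Defs begin
lemma sum_mult_reindex:
  fixes f :: "nat \<Rightarrow> 'a::comm_monoid_add"
  shows "(\<Sum>i<m*n. f i) = (\<Sum>a<m. \<Sum>p<n. f (a*n+p))"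
proof (induction m)
  case 0 then show ?case by simp
next
  case (Suc m)
  have e: "{..<Suc m * n} = {..<m*n} \<union> {m*n..<m*n+n}" by auto
  have "(\<Sum>i\<in>{0+m*n..<n+m*n}. f i) = (\<Sum>p\<in>{0..<n}. f (p+m*n))"
    by (rule sum.shift_bounds_nat_ivl)
  then have "(\<Sum>i\<in>{m*n..<m*n+n}. f i) = (\<Sum>p<n. f (m*n+p))"
    by (simp add: add.commute lessThan_atLeast0)
  moreover have "(\<Sum>i<Suc m * n. f i) = (\<Sum>i<m*n. f i) + (\<Sum>i\<in>{m*n..<m*n+n}. f i)"
    unfolding e by (rule sum.union_disjoint) auto
  ultimately show ?case using Suc by simp
qed
lemma mult_idx_less: "a < k \<Longrightarrow> p < (d::nat) \<Longrightarrow> a*d+p < k*d"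
proof -
  assume "a<k" "p<d"
  then have "a*d+p < a*d + d" by simp
  also have "\<dots> = Suc a * d" by simp
  also have "\<dots> \<le> k*d" using \<open>a<k\<close> by (intro mult_le_mono1) simp
  finally show ?thesis .
qed

lemma mult_entry: "A \<in> carrier_mat n m \<Longrightarrow> B \<in> carrier_mat m l \<Longrightarrow> i < n \<Longrightarrow> j < l \<Longrightarrow>
   (A * B) $$ (i,j) = (\<Sum>k<m. A $$ (i,k) * B $$ (k,j))"
  by (auto simp: scalar_prod_def lessThan_atLeast0 intro!: sum.cong)

lemma dag_dims[simp]: "dim_row (dag A) = dim_col A" "dim_col (dag A) = dim_row A"
  by (auto simp: dag_def)

lemma dag_carrier[simp]: "A \<in> carrier_mat n m \<Longrightarrow> dag A \<in> carrier_mat m n"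
  by (auto simp: dag_def)

lemma dag_entry: "A \<in> carrier_mat n m \<Longrightarrow> i < m \<Longrightarrow> j < n \<Longrightarrow> dag A $$ (i,j) = cnj (A $$ (j,i))"
  by (auto simp: dag_def)

lemma sandwich:
  assumes U: "U \<in> carrier_mat n n" and B: "B \<in> carrier_mat n n" and r: "r < n" and s: "s < n"
  shows "(U * B * dag U) $$ (r,s) = (\<Sum>p<n. \<Sum>q<n. U $$ (r,p) * B $$ (p,q) * cnj (U $$ (s,q)))"
proof -
  have UB: "U * B \<in> carrier_mat n n" using U B by auto
  have "(U * B * dag U) $$ (r,s) = (\<Sum>q<n. (U*B) $$ (r,q) * dag U $$ (q,s))"
    using mult_entry[OF UB dag_carrier[OF U] r s] .
  also have "\<dots> = (\<Sum>q<n. (\<Sum>p<n. U $$ (r,p) * B $$ (p,q)) * cnj (U $$ (s,q)))"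
    using mult_entry[OF U B r] dag_entry[OF U _ s] by (intro sum.cong) auto
  also have "\<dots> = (\<Sum>p<n. \<Sum>q<n. U $$ (r,p) * B $$ (p,q) * cnj (U $$ (s,q)))"
    by (subst sum.swap) (simp add: sum_distrib_right)
  finally show ?thesis .
qed

lemma herm_entry: "dag A = A \<Longrightarrow> A \<in> carrier_mat n n \<Longrightarrow> i < n \<Longrightarrow> j < n \<Longrightarrow> cnj (A $$ (j,i)) = A $$ (i,j)"
proof -
  assume "dag A = A" "A \<in> carrier_mat n n" "i < n" "j < n"
  then show ?thesis using dag_entry[of A n n i j] by simp
qed

lemma dag_mult: assumes A: "A \<in> carrier_mat n m" and B: "B \<in> carrier_mat m l"
  shows "dag (A * B) = dag B * dag A"
proof (rule eq_matI)
  fix i j assume i: "i < dim_row (dag B * dag A)" and j: "j < dim_col (dag B * dag A)"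
  then have i': "i < l" and j': "j < n" using A B by auto
  have "dag (A * B) $$ (i,j) = cnj ((A*B) $$ (j,i))" using A B i' j' by (auto simp: dag_def)
  also have "\<dots> = cnj (\<Sum>k<m. A $$ (j,k) * B $$ (k,i))" using mult_entry[OF A B j' i'] by simp
  also have "\<dots> = (\<Sum>k<m. dag B $$ (i,k) * dag A $$ (k,j))"
    using A B i' j' by (simp add: dag_entry mult.commute)
  also have "\<dots> = (dag B * dag A) $$ (i,j)" using mult_entry[OF dag_carrier[OF B] dag_carrier[OF A] i' j'] by simp
  finally show "dag (A * B) $$ (i,j) = (dag B * dag A) $$ (i,j)" .
next show "dim_row (dag (A * B)) = dim_row (dag B * dag A)" using A B by simp
next show "dim_col (dag (A * B)) = dim_col (dag B * dag A)" using A B by simp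
qed


lemma sum3_swap: "(\<Sum>p\<in>P. \<Sum>q\<in>Q. \<Sum>u\<in>W. f p q u) = (\<Sum>u\<in>W. \<Sum>p\<in>P. \<Sum>q\<in>Q. f p q u)"
proof -
  have "(\<Sum>p\<in>P. \<Sum>q\<in>Q. \<Sum>u\<in>W. f p q u) = (\<Sum>p\<in>P. \<Sum>u\<in>W. \<Sum>q\<in>Q. f p q u)"
    by (rule sum.cong[OF refl], rule sum.swap)
  also have "\<dots> = (\<Sum>u\<in>W. \<Sum>p\<in>P. \<Sum>q\<in>Q. f p q u)" by (rule sum.swap)
  finally show ?thesis .
qed

lemma sum_delta_mult: "finite S \<Longrightarrow> (\<Sum>q\<in>S. f q * (if q = p then 1 else (0::'a::semiring_1))) = (if p \<in> S then f p else 0)"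
  by (simp add: if_distrib[of "\<lambda>x. f _ * x"] sum.delta cong: if_cong)


lemma dag_dag: "A \<in> carrier_mat n m \<Longrightarrow> dag (dag A) = A"
  by (auto simp: dag_def intro!: eq_matI)

lemma quad_eq: assumes M: "M \<in> carrier_mat n n" and v: "v \<in> carrier_vec n"
  shows "conjugate v \<bullet> (M *\<^sub>v v) = (\<Sum>i<n. \<Sum>j<n. cnj (v$i) * M$$(i,j) * v$j)"
  using M v by (auto simp: scalar_prod_def mult_mat_vec_def lessThan_atLeast0 sum_distrib_left ac_simps
      intro!: sum.cong)

lemma adj_sprod: assumes W: "W \<in> carrier_mat n m" and v: "v \<in> carrier_vec n" and y: "y \<in> carrier_vec m"
  shows "conjugate v \<bullet> (W *\<^sub>v y) = conjugate (dag W *\<^sub>v v) \<bullet> y"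
proof -
  have "conjugate v \<bullet> (W *\<^sub>v y) = (\<Sum>i<n. cnj (v$i) * (\<Sum>a<m. W $$ (i,a) * y$a))"
    using W v y by (auto simp: scalar_prod_def mult_mat_vec_def lessThan_atLeast0 intro!: sum.cong)
  also have "\<dots> = (\<Sum>a<m. \<Sum>i<n. cnj (v$i) * W $$ (i,a) * y$a)"
    by (subst sum.swap) (simp add: sum_distrib_left ac_simps)
  also have "\<dots> = (\<Sum>a<m. cnj (\<Sum>i<n. dag W $$ (a,i) * v$i) * y$a)"
    using W by (auto simp: dag_entry sum_distrib_left sum_distrib_right ac_simps intro!: sum.cong)
  also have "\<dots> = conjugate (dag W *\<^sub>v v) \<bullet> y"
    using W v y by (auto simp: scalar_prod_def mult_mat_vec_def lessThan_atLeast0 intro!: sum.cong)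
  finally show ?thesis .
qed

lemma psd_sandwich: assumes X: "psd m X" and W: "W \<in> carrier_mat n m"
  shows "psd n (W * X * dag W)"
proof -
  have Xc: "X \<in> carrier_mat m m" and Xh: "dag X = X" and Xp: "\<forall>v\<in>carrier_vec m. 0 \<le> Re (conjugate v \<bullet> (X *\<^sub>v v))"
    using X by (auto simp: psd_def)
  have dW: "dag W \<in> carrier_mat m n" using W by simp
  have c: "W * X * dag W \<in> carrier_mat n n" using W Xc by auto
  have "dag (W * X * dag W) = dag (dag W) * dag (W * X)"
    using dag_mult[of "W * X" n m "dag W" n] W Xc by auto
  also have "\<dots> = W * (X * dag W)" using dag_dag[OF W] dag_mult[OF W Xc] Xh by simp
  also have "\<dots> = W * X * dag W" using W Xc by (intro assoc_mult_mat[symmetric]) auto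
  finally have h: "dag (W * X * dag W) = W * X * dag W" .
  have p: "0 \<le> Re (conjugate v \<bullet> ((W * X * dag W) *\<^sub>v v))" if v: "v \<in> carrier_vec n" for v
  proof -
    have dWv: "dag W *\<^sub>v v \<in> carrier_vec m" using dW v by (rule mult_mat_vec_carrier)
    have "(W * X * dag W) *\<^sub>v v = (W * X) *\<^sub>v (dag W *\<^sub>v v)"
      using W Xc v dW by (intro assoc_mult_mat_vec) auto
    also have "\<dots> = W *\<^sub>v (X *\<^sub>v (dag W *\<^sub>v v))"
      using W Xc dWv by (intro assoc_mult_mat_vec) auto
    finally have "conjugate v \<bullet> ((W * X * dag W) *\<^sub>v v) = conjugate (dag W *\<^sub>v v) \<bullet> (X *\<^sub>v (dag W *\<^sub>v v))"
      using adj_sprod[OF W v, of "X *\<^sub>v (dag W *\<^sub>v v)"] W Xc v dWv by auto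
    then show ?thesis using Xp dWv by auto
  qed
  show ?thesis using c h p by (simp add: psd_def)
qed

lemma block_sum:
  fixes g f :: "nat \<Rightarrow> 'a::semiring_1"
  assumes i: "i < k * d"
  shows "(\<Sum>a<k*d. (if i div d = a div d then g (a mod d) else 0) * f a) = (\<Sum>p<d. g p * f (i div d * d + p))"
proof -
  have dpos: "d > 0" using i by (cases d) auto
  have ik: "i div d < k" using i by (simp add: less_mult_imp_div_less)
  have "(\<Sum>a<k*d. (if i div d = a div d then g (a mod d) else 0) * f a)
     = (\<Sum>a1<k. \<Sum>p<d. (if i div d = (a1*d+p) div d then g ((a1*d+p) mod d) else 0) * f (a1*d+p))"
    by (rule sum_mult_reindex)
  also have "\<dots> = (\<Sum>a1<k. if i div d = a1 then (\<Sum>p<d. g p * f (a1*d+p)) else 0)"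
    by (intro sum.cong refl) auto
  also have "\<dots> = (\<Sum>p<d. g p * f (i div d * d + p))" using ik by (simp add: sum.delta)
  finally show ?thesis .
qed


lemma kron_dims[simp]: "dim_row (kron A B) = dim_row A * dim_row B" "dim_col (kron A B) = dim_col A * dim_col B"
  by (simp_all add: kron_def)

lemma kron_entry: "i < dim_row A * dim_row B \<Longrightarrow> j < dim_col A * dim_col B \<Longrightarrow>
   kron A B $$ (i,j) = A $$ (i div dim_row B, j div dim_col B) * B $$ (i mod dim_row B, j mod dim_col B)"
  by (simp add: kron_def)

lemma kron_list_carrier: "set As \<subseteq> carrier_mat n n \<Longrightarrow> kron_list As \<in> carrier_mat (n ^ length As) (n ^ length As)"
proof (induction As)
  case Nil then show ?case by simp
next
  case (Cons A As)
  then have "A \<in> carrier_mat n n" "kron_list As \<in> carrier_mat (n ^ length As) (n ^ length As)" by auto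
  then show ?case unfolding carrier_mat_def by simp
qed

lemma div_mod_idx1: "p < (D::nat) \<Longrightarrow> (a*D+p) div D = a"
  by simp
lemma div_mod_idx2: "p < (D::nat) \<Longrightarrow> (a*D+p) mod D = p"
  by simp

lemma kron_herm_tr:
  "set As \<subseteq> {\<sigma> \<in> carrier_mat n n. dag \<sigma> = \<sigma> \<and> tr \<sigma> = 1} \<Longrightarrow> dag (kron_list As) = kron_list As \<and> tr (kron_list As) = 1"
proof (induction As)
  case Nil
  have "dag (1\<^sub>m 1 :: complex mat) = 1\<^sub>m 1" by (auto simp: dag_def intro!: eq_matI)
  then show ?case by (simp add: tr_def)
next
  case (Cons A As)
  let ?D = "n ^ length As"
  let ?K = "kron_list As"
  have A: "A \<in> carrier_mat n n" "dag A = A" "tr A = 1" using Cons.prems by auto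
  have K: "?K \<in> carrier_mat ?D ?D" using Cons.prems by (intro kron_list_carrier) auto
  have KH: "dag ?K = ?K" "tr ?K = 1" using Cons by auto
  have kc: "kron A ?K \<in> carrier_mat (n * ?D) (n * ?D)"
    using A(1) K by (intro carrier_matI) auto
  have dims: "dim_row A = n" "dim_col A = n" "dim_row ?K = ?D" "dim_col ?K = ?D" using A(1) K by auto
  have "dag (kron A ?K) = kron A ?K"
  proof (rule eq_matI)
    fix i j assume "i < dim_row (kron A ?K)" "j < dim_col (kron A ?K)"
    then have i: "i < n * ?D" and j: "j < n * ?D" using kc by auto
    have Dpos: "?D > 0" using i by (metis mult_0_right not_less_zero gr0I)
    have iD: "i div ?D < n" "i mod ?D < ?D" and jD: "j div ?D < n" "j mod ?D < ?D"
      using i j Dpos by (auto simp: less_mult_imp_div_less mult.commute[of n])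
    have "dag (kron A ?K) $$ (i,j) = cnj (kron A ?K $$ (j,i))" using dag_entry[OF kc i j] .
    also have "\<dots> = cnj (A $$ (j div ?D, i div ?D)) * cnj (?K $$ (j mod ?D, i mod ?D))"
      using kron_entry[of j A ?K i] A K i j by simp
    also have "\<dots> = A $$ (i div ?D, j div ?D) * ?K $$ (i mod ?D, j mod ?D)"
      using herm_entry[OF A(2) A(1) iD(1) jD(1)] herm_entry[OF KH(1) K iD(2) jD(2)] by simp
    also have "\<dots> = kron A ?K $$ (i,j)" using kron_entry[of i A ?K j] A K i j by simp
    finally show "dag (kron A ?K) $$ (i,j) = kron A ?K $$ (i,j)" .
  qed (use A(1) K in auto)
  moreover have "tr (kron A ?K) = 1"
  proof -
    have "tr (kron A ?K) = (\<Sum>i<n * ?D. kron A ?K $$ (i,i))" using dims by (simp add: tr_def)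
    also have "\<dots> = (\<Sum>a<n. \<Sum>p<?D. kron A ?K $$ (a * ?D + p, a * ?D + p))" by (rule sum_mult_reindex)
    also have "\<dots> = (\<Sum>a<n. \<Sum>p<?D. A $$ (a,a) * ?K $$ (p,p))"
    proof (intro sum.cong refl)
      fix a p assume a: "a \<in> {..<n}" and p: "p \<in> {..<?D}"
      then have "a * ?D + p < n * ?D" using mult_idx_less by auto
      then show "kron A ?K $$ (a * ?D + p, a * ?D + p) = A $$ (a,a) * ?K $$ (p,p)"
        using kron_entry[of "a * ?D + p" A ?K "a * ?D + p"] dims p by (simp add: div_mod_idx1 div_mod_idx2)
    qed
    also have "\<dots> = tr A * tr ?K" unfolding tr_def dims by (rule sum_product[symmetric])
    finally show ?thesis using A KH by simp
  qed
  ultimately show ?case by simp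
qed

definition isComb :: "nat \<Rightarrow> complex mat set \<Rightarrow> (nat \<Rightarrow> nat \<Rightarrow> complex) \<Rightarrow> bool" where
  "isComb n S f \<longleftrightarrow> (\<exists>ps. set (map snd ps) \<subseteq> S \<and> (\<forall>i<n. \<forall>j<n. f i j = (\<Sum>p\<leftarrow>ps. fst p * snd p $$ (i,j))))"

lemma comb_zero: "isComb n S (\<lambda>i j. 0)"
  unfolding isComb_def by (rule exI[of _ "[]"]) simp

lemma comb_add: "isComb n S f \<Longrightarrow> isComb n S g \<Longrightarrow> isComb n S (\<lambda>i j. f i j + g i j)"
  unfolding isComb_def
proof (elim exE conjE)
  fix ps qs assume "set (map snd ps) \<subseteq> S" "\<forall>i<n. \<forall>j<n. f i j = (\<Sum>p\<leftarrow>ps. fst p * snd p $$ (i,j))"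
    "set (map snd qs) \<subseteq> S" "\<forall>i<n. \<forall>j<n. g i j = (\<Sum>p\<leftarrow>qs. fst p * snd p $$ (i,j))"
  then show "\<exists>ps. set (map snd ps) \<subseteq> S \<and> (\<forall>i<n. \<forall>j<n. f i j + g i j = (\<Sum>p\<leftarrow>ps. fst p * snd p $$ (i,j)))"
    by (intro exI[of _ "ps @ qs"]) auto
qed

lemma sum_list_cmult: "(\<Sum>x\<leftarrow>xs. c * f x) = (c::'a::semiring_0) * (\<Sum>x\<leftarrow>xs. f x)"
  by (induction xs) (auto simp: distrib_left)

lemma comb_smult: "isComb n S f \<Longrightarrow> isComb n S (\<lambda>i j. c * f i j)"
  unfolding isComb_def
proof (elim exE conjE)
  fix ps assume "set (map snd ps) \<subseteq> S" "\<forall>i<n. \<forall>j<n. f i j = (\<Sum>p\<leftarrow>ps. fst p * snd p $$ (i,j))"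
  then show "\<exists>ps. set (map snd ps) \<subseteq> S \<and> (\<forall>i<n. \<forall>j<n. c * f i j = (\<Sum>p\<leftarrow>ps. fst p * snd p $$ (i,j)))"
    by (intro exI[of _ "map (\<lambda>p. (c * fst p, snd p)) ps"])
       (auto simp: o_def sum_list_cmult[symmetric] mult.assoc)
qed

lemma comb_sum: "finite A \<Longrightarrow> (\<And>x. x \<in> A \<Longrightarrow> isComb n S (f x)) \<Longrightarrow> isComb n S (\<lambda>i j. \<Sum>x\<in>A. f x i j)"
proof (induction A rule: finite_induct)
  case empty then show ?case using comb_zero by simp
next
  case (insert x A)
  then show ?case using comb_add[of n S "f x" "\<lambda>i j. \<Sum>x\<in>A. f x i j"] by simp
qed

lemma comb_mono: "isComb n S f \<Longrightarrow> S \<subseteq> S' \<Longrightarrow> isComb n S' f"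
  unfolding isComb_def by blast

lemma comb_ext: "isComb n S f \<Longrightarrow> (\<And>i j. i < n \<Longrightarrow> j < n \<Longrightarrow> g i j = f i j) \<Longrightarrow> isComb n S g"
  unfolding isComb_def by auto

lemma sum_list_prod: "(\<Sum>p\<leftarrow>concat (map (\<lambda>p1. map (\<lambda>p2. h p1 p2) ys) xs). f p) =
   (\<Sum>p1\<leftarrow>xs. \<Sum>p2\<leftarrow>ys. f (h p1 p2))"
  by (induction xs) (auto simp: o_def)

lemma sum_list_mult_sum_list: "(\<Sum>x\<leftarrow>xs. f x) * (\<Sum>y\<leftarrow>ys. g y) = (\<Sum>x\<leftarrow>xs. \<Sum>y\<leftarrow>ys. (f x * g y :: 'a::semiring_0))"
  by (induction xs) (auto simp: distrib_right sum_list_cmult)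

lemma comb_kron:
  assumes S1: "\<And>\<sigma>. \<sigma> \<in> S1 \<Longrightarrow> \<sigma> \<in> carrier_mat d d" and S2: "\<And>\<tau>. \<tau> \<in> S2 \<Longrightarrow> \<tau> \<in> carrier_mat D D"
    and f: "isComb d S1 f" and g: "isComb D S2 g"
  shows "isComb (d*D) {kron \<sigma> \<tau> | \<sigma> \<tau>. \<sigma> \<in> S1 \<and> \<tau> \<in> S2} (\<lambda>i j. f (i div D) (j div D) * g (i mod D) (j mod D))"
proof -
  obtain ps where ps: "set (map snd ps) \<subseteq> S1" "\<forall>i<d. \<forall>j<d. f i j = (\<Sum>p\<leftarrow>ps. fst p * snd p $$ (i,j))"
    using f unfolding isComb_def by blast
  obtain qs where qs: "set (map snd qs) \<subseteq> S2" "\<forall>i<D. \<forall>j<D. g i j = (\<Sum>p\<leftarrow>qs. fst p * snd p $$ (i,j))"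
    using g unfolding isComb_def by blast
  let ?h = "\<lambda>p1 p2. (fst p1 * fst p2, kron (snd p1) (snd p2))"
  let ?rs = "concat (map (\<lambda>p1. map (\<lambda>p2. ?h p1 p2) qs) ps)"
  have "set (map snd ?rs) \<subseteq> {kron \<sigma> \<tau> | \<sigma> \<tau>. \<sigma> \<in> S1 \<and> \<tau> \<in> S2}"
  proof
    fix y assume "y \<in> set (map snd ?rs)"
    then obtain p1 p2 where "p1 \<in> set ps" "p2 \<in> set qs" "y = kron (snd p1) (snd p2)" by auto
    moreover then have "snd p1 \<in> S1" "snd p2 \<in> S2" using ps(1) qs(1) by auto
    ultimately show "y \<in> {kron \<sigma> \<tau> | \<sigma> \<tau>. \<sigma> \<in> S1 \<and> \<tau> \<in> S2}" by blast
  qed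
  moreover have "f (i div D) (j div D) * g (i mod D) (j mod D) = (\<Sum>p\<leftarrow>?rs. fst p * snd p $$ (i,j))"
    if i: "i < d*D" and j: "j < d*D" for i j
  proof -
    have Dpos: "D > 0" using i by (cases D) auto
    have iD: "i div D < d" "i mod D < D" and jD: "j div D < d" "j mod D < D"
      using i j Dpos by (auto simp: less_mult_imp_div_less mult.commute[of d])
    have "(\<Sum>p\<leftarrow>?rs. fst p * snd p $$ (i,j)) = (\<Sum>p1\<leftarrow>ps. \<Sum>p2\<leftarrow>qs. fst p1 * fst p2 * kron (snd p1) (snd p2) $$ (i,j))"
      by (simp add: sum_list_prod)
    also have "\<dots> = (\<Sum>p1\<leftarrow>ps. \<Sum>p2\<leftarrow>qs. (fst p1 * snd p1 $$ (i div D, j div D)) * (fst p2 * snd p2 $$ (i mod D, j mod D)))"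
    proof -
      have "\<And>p1 p2. p1 \<in> set ps \<Longrightarrow> p2 \<in> set qs \<Longrightarrow> fst p1 * fst p2 * kron (snd p1) (snd p2) $$ (i,j) =
         (fst p1 * snd p1 $$ (i div D, j div D)) * (fst p2 * snd p2 $$ (i mod D, j mod D))"
      proof -
        fix p1 p2 assume "p1 \<in> set ps" "p2 \<in> set qs"
        then have c1: "snd p1 \<in> carrier_mat d d" and c2: "snd p2 \<in> carrier_mat D D"
          using ps(1) qs(1) S1 S2 by auto
        then show "fst p1 * fst p2 * kron (snd p1) (snd p2) $$ (i,j) =
         (fst p1 * snd p1 $$ (i div D, j div D)) * (fst p2 * snd p2 $$ (i mod D, j mod D))"
          using kron_entry[of i "snd p1" "snd p2" j] i j by (simp add: ac_simps)
      qed
      then show ?thesis by (intro arg_cong[where f = sum_list] map_cong refl) auto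
    qed
    also have "\<dots> = f (i div D) (j div D) * g (i mod D) (j mod D)"
      using ps(2) qs(2) iD jD by (simp add: sum_list_mult_sum_list)
    finally show ?thesis by simp
  qed
  ultimately show ?thesis unfolding isComb_def by blast
qed

lemma cnj_sum_list: "cnj (\<Sum>x\<leftarrow>xs. f x) = (\<Sum>x\<leftarrow>xs. cnj (f x))"
  by (induction xs) auto

lemma of_real_sum_list: "complex_of_real (\<Sum>x\<leftarrow>xs. f x) = (\<Sum>x\<leftarrow>xs. complex_of_real (f x))"
  by (induction xs) auto

lemma sum_sum_list_swap: "(\<Sum>i\<in>I. \<Sum>x\<leftarrow>xs. f i x) = (\<Sum>x\<leftarrow>xs. \<Sum>i\<in>I. f i x)"
  by (induction xs) (auto simp: sum.distrib)

lemma group_real: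
  assumes "finite A" "set (map snd xs) \<subseteq> A"
  shows "(\<Sum>\<sigma>\<in>A. \<Sum>p\<leftarrow>xs. if snd p = \<sigma> then r p else (0::real)) = (\<Sum>p\<leftarrow>xs. r p)"
  using assms(2)
proof (induction xs)
  case Nil then show ?case by simp
next
  case (Cons x xs)
  then show ?case using assms(1) by (simp add: sum.distrib sum.delta)
qed

lemma group_mat:
  assumes "finite A" "set (map snd xs) \<subseteq> A"
  shows "(\<Sum>\<sigma>\<in>A. complex_of_real (\<Sum>p\<leftarrow>xs. if snd p = \<sigma> then r p else 0) * \<sigma> $$ ij) =
         (\<Sum>p\<leftarrow>xs. complex_of_real (r p) * snd p $$ ij)"
  using assms(2)
proof (induction xs)
  case Nil then show ?case by simp
next
  case (Cons x xs)
  have "(\<Sum>\<sigma>\<in>A. complex_of_real (\<Sum>p\<leftarrow>x # xs. if snd p = \<sigma> then r p else 0) * \<sigma> $$ ij) =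
     (\<Sum>\<sigma>\<in>A. (if snd x = \<sigma> then complex_of_real (r x) * \<sigma> $$ ij else 0)) +
     (\<Sum>\<sigma>\<in>A. complex_of_real (\<Sum>p\<leftarrow>xs. if snd p = \<sigma> then r p else 0) * \<sigma> $$ ij)"
    by (auto simp: sum.distrib[symmetric] distrib_right intro!: sum.cong)
  also have "\<dots> = complex_of_real (r x) * snd x $$ ij + (\<Sum>p\<leftarrow>xs. complex_of_real (r p) * snd p $$ ij)"
    using Cons assms(1) by (simp add: sum.delta)
  finally show ?case by simp
qed

lemma comb_Aff:
  assumes \<rho>: "\<rho> \<in> density_ops n" and T: "T \<subseteq> {\<sigma> \<in> carrier_mat n n. dag \<sigma> = \<sigma> \<and> tr \<sigma> = 1}"
    and c: "isComb n T (\<lambda>i j. \<rho> $$ (i,j))"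
  shows "\<rho> \<in> Aff n T"
proof -
  obtain ps where ps: "set (map snd ps) \<subseteq> T" "\<forall>i<n. \<forall>j<n. \<rho> $$ (i,j) = (\<Sum>p\<leftarrow>ps. fst p * snd p $$ (i,j))"
    using c unfolding isComb_def by blast
  have \<rho>c: "\<rho> \<in> carrier_mat n n" and \<rho>h: "dag \<rho> = \<rho>" and \<rho>t: "tr \<rho> = 1"
    using \<rho> by (auto simp: density_ops_def psd_def)
  have Tc: "\<And>p. p \<in> set ps \<Longrightarrow> snd p \<in> carrier_mat n n \<and> dag (snd p) = snd p \<and> tr (snd p) = 1"
    using ps(1) T by auto
  have re: "\<rho> $$ (i,j) = (\<Sum>p\<leftarrow>ps. complex_of_real (Re (fst p)) * snd p $$ (i,j))" if i: "i < n" and j: "j < n" for i j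
  proof -
    have "\<rho> $$ (i,j) = cnj (\<rho> $$ (j,i))" using herm_entry[OF \<rho>h \<rho>c i j] by simp
    also have "\<dots> = (\<Sum>p\<leftarrow>ps. cnj (fst p * snd p $$ (j,i)))"
      using ps(2) i j by (simp add: cnj_sum_list)
    also have "\<dots> = (\<Sum>p\<leftarrow>ps. cnj (fst p) * snd p $$ (i,j))"
    proof (intro arg_cong[where f = sum_list] map_cong refl)
      fix p assume "p \<in> set ps"
      then have "snd p \<in> carrier_mat n n" "dag (snd p) = snd p" using Tc by auto
      then have "cnj (snd p $$ (j,i)) = snd p $$ (i,j)" using herm_entry[of "snd p" n i j] i j by simp
      then show "cnj (fst p * snd p $$ (j,i)) = cnj (fst p) * snd p $$ (i,j)" by simp
    qed
    finally have e2: "\<rho> $$ (i,j) = (\<Sum>p\<leftarrow>ps. cnj (fst p) * snd p $$ (i,j))" .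
    have "2 * \<rho> $$ (i,j) = (\<Sum>p\<leftarrow>ps. fst p * snd p $$ (i,j)) + (\<Sum>p\<leftarrow>ps. cnj (fst p) * snd p $$ (i,j))"
      using ps(2) i j e2 by simp
    also have "\<dots> = (\<Sum>p\<leftarrow>ps. 2 * (complex_of_real (Re (fst p)) * snd p $$ (i,j)))"
      by (simp add: sum_list_addf[symmetric] distrib_right[symmetric] complex_add_cnj mult.assoc)
    also have "\<dots> = 2 * (\<Sum>p\<leftarrow>ps. complex_of_real (Re (fst p)) * snd p $$ (i,j))"
      by (rule sum_list_cmult)
    finally show ?thesis by simp
  qed
  have tsum: "(\<Sum>p\<leftarrow>ps. Re (fst p)) = 1"
  proof -
    have "(1::complex) = (\<Sum>i<n. \<rho> $$ (i,i))" using \<rho>t \<rho>c by (simp add: tr_def)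
    also have "\<dots> = (\<Sum>i<n. \<Sum>p\<leftarrow>ps. complex_of_real (Re (fst p)) * snd p $$ (i,i))" using re by simp
    also have "\<dots> = (\<Sum>p\<leftarrow>ps. complex_of_real (Re (fst p)) * (\<Sum>i<n. snd p $$ (i,i)))"
      by (simp add: sum_sum_list_swap sum_distrib_left)
    also have "\<dots> = (\<Sum>p\<leftarrow>ps. complex_of_real (Re (fst p)))"
    proof (intro arg_cong[where f = sum_list] map_cong refl)
      fix p assume "p \<in> set ps"
      then have "tr (snd p) = 1" "snd p \<in> carrier_mat n n" using Tc by auto
      then show "complex_of_real (Re (fst p)) * (\<Sum>i<n. snd p $$ (i,i)) = complex_of_real (Re (fst p))"
        by (simp add: tr_def)
    qed
    also have "\<dots> = complex_of_real (\<Sum>p\<leftarrow>ps. Re (fst p))" by (simp add: of_real_sum_list)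
    finally have "complex_of_real (\<Sum>p\<leftarrow>ps. Re (fst p)) = 1" by simp
    then show ?thesis by (simp only: of_real_eq_1_iff)
  qed
  define A where "A = set (map snd ps)"
  define t where "t = (\<lambda>\<sigma>. \<Sum>p\<leftarrow>ps. if snd p = \<sigma> then Re (fst p) else 0)"
  have A: "finite A" "A \<subseteq> T" using ps(1) by (auto simp: A_def)
  have "(\<Sum>\<sigma>\<in>A. t \<sigma>) = 1" unfolding t_def using group_real[OF A(1), of ps] tsum by (simp add: A_def)
  moreover have "\<rho> = mat n n (\<lambda>ij. \<Sum>\<sigma>\<in>A. complex_of_real (t \<sigma>) * \<sigma> $$ ij)"
  proof (rule eq_matI)
    fix i j assume "i < dim_row (mat n n (\<lambda>ij. \<Sum>\<sigma>\<in>A. complex_of_real (t \<sigma>) * \<sigma> $$ ij))"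
      "j < dim_col (mat n n (\<lambda>ij. \<Sum>\<sigma>\<in>A. complex_of_real (t \<sigma>) * \<sigma> $$ ij))"
    then have i: "i < n" and j: "j < n" by auto
    have "(\<Sum>\<sigma>\<in>A. complex_of_real (t \<sigma>) * \<sigma> $$ (i,j)) = (\<Sum>p\<leftarrow>ps. complex_of_real (Re (fst p)) * snd p $$ (i,j))"
      unfolding t_def using group_mat[OF A(1), of ps] by (simp add: A_def)
    then show "\<rho> $$ (i,j) = mat n n (\<lambda>ij. \<Sum>\<sigma>\<in>A. complex_of_real (t \<sigma>) * \<sigma> $$ ij) $$ (i,j)"
      using re[OF i j] i j by simp
  qed (use \<rho>c in auto)
  ultimately have "\<exists>A t. finite A \<and> A \<subseteq> T \<and> (\<Sum>\<sigma>\<in>A. t \<sigma>) = (1::real) \<and>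
       \<rho> = mat n n (\<lambda>ij. \<Sum>\<sigma>\<in>A. complex_of_real (t \<sigma>) * \<sigma> $$ ij)" using A by blast
  with \<rho> have "\<rho> \<in> density_ops n \<and> (\<exists>A t. finite A \<and> A \<subseteq> T \<and> (\<Sum>\<sigma>\<in>A. t \<sigma>) = (1::real) \<and>
       \<rho> = mat n n (\<lambda>ij. \<Sum>\<sigma>\<in>A. complex_of_real (t \<sigma>) * \<sigma> $$ ij))" by (rule conjI)
  then show ?thesis unfolding Aff_def mem_Collect_eq .
qed


lemma sum_list_idx: "(\<Sum>x\<leftarrow>xs. h x) = (\<Sum>k<length xs. h (xs ! k))"
  by (simp add: sum_list_sum_nth lessThan_atLeast0)

lemma sum_two: assumes "a \<noteq> b" "a < d" "b < (d::nat)"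
  shows "(\<Sum>p<d. (if p = a then x else if p = b then y else 0)) = x + (y::'a::comm_monoid_add)"
proof -
  have "(\<Sum>p<d. (if p = a then x else if p = b then y else 0)) = (\<Sum>p<d. (if p = a then x else 0) + (if p = b then y else 0))"
    using assms(1) by (intro sum.cong) auto
  also have "\<dots> = x + y" using assms by (simp add: sum.distrib)
  finally show ?thesis .
qed

lemma sum_delta2: assumes "a < d" "b < (d::nat)"
  shows "(\<Sum>p<d. \<Sum>q<d. f p q * (if p = a \<and> q = b then 1 else 0) * g p q) = f a b * (g a b :: 'a::comm_semiring_1)"
proof -
  have e: "\<And>p q. f p q * (if p = a \<and> q = b then 1 else 0) * g p q = (if q = b then (if p = a then f a b * g a b else 0) else 0)"
    by auto
  show ?thesis unfolding e using assms by simp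
qed


lemma sum4_swap: "(\<Sum>a\<in>A. \<Sum>b\<in>B. \<Sum>u\<in>C. \<Sum>v\<in>E. f a b u v) = (\<Sum>u\<in>C. \<Sum>v\<in>E. \<Sum>a\<in>A. \<Sum>b\<in>B. f a b u v)"
proof -
  have "(\<Sum>a\<in>A. \<Sum>b\<in>B. \<Sum>u\<in>C. \<Sum>v\<in>E. f a b u v) = (\<Sum>a\<in>A. \<Sum>u\<in>C. \<Sum>b\<in>B. \<Sum>v\<in>E. f a b u v)"
    by (rule sum.cong[OF refl], rule sum.swap)
  also have "\<dots> = (\<Sum>u\<in>C. \<Sum>a\<in>A. \<Sum>b\<in>B. \<Sum>v\<in>E. f a b u v)" by (rule sum.swap)
  also have "\<dots> = (\<Sum>u\<in>C. \<Sum>v\<in>E. \<Sum>a\<in>A. \<Sum>b\<in>B. f a b u v)"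
    by (rule sum.cong[OF refl], rule sum3_swap)
  finally show ?thesis .
qed

locale grp =
  fixes d :: nat and G :: "complex mat set"
  assumes finG: "finite G"
    and unit: "\<forall>U \<in> G. unitary d U"
    and one: "1\<^sub>m d \<in> G"
    and mult: "\<forall>U \<in> G. \<forall>V \<in> G. U * V \<in> G"
    and inv: "\<forall>U \<in> G. dag U \<in> G"
begin

lemma G_carrier: "U \<in> G \<Longrightarrow> U \<in> carrier_mat d d"
  using unit by (auto simp: unitary_def)

lemma card_pos: "card G > 0"
  using finG one card_gt_0_iff by blast

lemma unit_col: assumes U: "U \<in> G" and p: "p < d" and q: "q < d"
  shows "(\<Sum>i<d. cnj (U $$ (i,q)) * U $$ (i,p)) = (if q = p then 1 else 0)"
proof -
  have Uc: "U \<in> carrier_mat d d" using G_carrier U .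
  have "dag U * U = 1\<^sub>m d" using unit U by (auto simp: unitary_def)
  then have "(dag U * U) $$ (q,p) = (if q = p then 1 else 0)" using p q by simp
  moreover have "(dag U * U) $$ (q,p) = (\<Sum>i<d. dag U $$ (q,i) * U $$ (i,p))"
    using mult_entry[OF dag_carrier[OF Uc] Uc q p] .
  moreover have "\<dots> = (\<Sum>i<d. cnj (U $$ (i,q)) * U $$ (i,p))"
    using dag_entry[OF Uc q] by (intro sum.cong) auto
  ultimately show ?thesis by simp
qed

lemma twirl_carrier[simp]: "twirl d G A \<in> carrier_mat d d"
  by (simp add: twirl_def)

lemma twirl_dims[simp]: "dim_row (twirl d G A) = d" "dim_col (twirl d G A) = d"
  by (simp_all add: twirl_def)

lemma twirl_entry: assumes A: "A \<in> carrier_mat d d" and r: "r < d" and s: "s < d"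
  shows "twirl d G A $$ (r,s) = 1 / of_nat (card G) *
     (\<Sum>U\<in>G. \<Sum>p<d. \<Sum>q<d. U $$ (r,p) * A $$ (p,q) * cnj (U $$ (s,q)))"
  using r s sandwich[OF G_carrier A r s] by (simp add: twirl_def)

lemma twirl_add: assumes A: "A \<in> carrier_mat d d" and B: "B \<in> carrier_mat d d"
  shows "twirl d G (A + B) = twirl d G A + twirl d G B"
proof (rule eq_matI)
  fix r s assume "r < dim_row (twirl d G A + twirl d G B)" "s < dim_col (twirl d G A + twirl d G B)"
  then have r: "r < d" and s: "s < d" by auto
  have AB: "A + B \<in> carrier_mat d d" using A B by simp
  show "twirl d G (A + B) $$ (r,s) = (twirl d G A + twirl d G B) $$ (r,s)"
    using r s A B
    by (simp add: twirl_entry[OF AB r s] twirl_entry[OF A r s] twirl_entry[OF B r s]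
        sum.distrib distrib_left distrib_right add_divide_distrib)
qed auto

lemma twirl_smult: assumes A: "A \<in> carrier_mat d d"
  shows "twirl d G (c \<cdot>\<^sub>m A) = c \<cdot>\<^sub>m twirl d G A"
proof (rule eq_matI)
  fix r s assume "r < dim_row (c \<cdot>\<^sub>m twirl d G A)" "s < dim_col (c \<cdot>\<^sub>m twirl d G A)"
  then have r: "r < d" and s: "s < d" by auto
  have cA: "c \<cdot>\<^sub>m A \<in> carrier_mat d d" using A by simp
  show "twirl d G (c \<cdot>\<^sub>m A) $$ (r,s) = (c \<cdot>\<^sub>m twirl d G A) $$ (r,s)"
    using r s A
    by (simp add: twirl_entry[OF cA r s] twirl_entry[OF A r s] sum_distrib_left ac_simps)
qed auto

lemma twirl_trace: assumes A: "A \<in> carrier_mat d d"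
  shows "tr (twirl d G A) = tr A"
proof -
  have "tr (twirl d G A) = (\<Sum>i<d. twirl d G A $$ (i,i))" by (simp add: tr_def)
  also have "\<dots> = (\<Sum>i<d. 1 / of_nat (card G) *
     (\<Sum>U\<in>G. \<Sum>p<d. \<Sum>q<d. U $$ (i,p) * A $$ (p,q) * cnj (U $$ (i,q))))"
    using twirl_entry[OF A] by simp
  also have "\<dots> = 1 / of_nat (card G) * (\<Sum>U\<in>G. \<Sum>p<d. \<Sum>q<d. A $$ (p,q) * (\<Sum>i<d. cnj (U $$ (i,q)) * U $$ (i,p)))"
  proof -
    have "\<And>U. (\<Sum>i<d. \<Sum>p<d. \<Sum>q<d. U $$ (i,p) * A $$ (p,q) * cnj (U $$ (i,q)))
       = (\<Sum>p<d. \<Sum>q<d. \<Sum>i<d. A $$ (p,q) * (cnj (U $$ (i,q)) * U $$ (i,p)))"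
      by (subst sum3_swap[symmetric]) (simp add: ac_simps)
    moreover have "(\<Sum>i<d. 1 / of_nat (card G) *
     (\<Sum>U\<in>G. \<Sum>p<d. \<Sum>q<d. U $$ (i,p) * A $$ (p,q) * cnj (U $$ (i,q)))) =
      1 / of_nat (card G) * (\<Sum>U\<in>G. \<Sum>i<d. \<Sum>p<d. \<Sum>q<d. U $$ (i,p) * A $$ (p,q) * cnj (U $$ (i,q)))"
      by (subst sum.swap) (simp add: sum_distrib_left)
    ultimately show ?thesis
      by (simp add: sum_distrib_left)
  qed
  also have "\<dots> = 1 / of_nat (card G) * (\<Sum>U\<in>G. \<Sum>p<d. A $$ (p,p))"
    by (simp add: unit_col sum_delta_mult)
  also have "\<dots> = tr A" using card_pos A by (simp add: tr_def)
  finally show ?thesis .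
qed


lemma G_inj: assumes V: "V \<in> G" shows "inj_on (\<lambda>U. V * U) G"
proof (rule inj_onI)
  fix U1 U2 assume U1: "U1 \<in> G" and U2: "U2 \<in> G" and e: "V * U1 = V * U2"
  have Vc: "V \<in> carrier_mat d d" and U1c: "U1 \<in> carrier_mat d d" and U2c: "U2 \<in> carrier_mat d d"
    using G_carrier V U1 U2 by auto
  have dv: "dag V * V = 1\<^sub>m d" using unit V by (auto simp: unitary_def)
  have "U1 = (dag V * V) * U1" using dv U1c by simp
  also have "\<dots> = dag V * (V * U1)" using Vc U1c by (intro assoc_mult_mat) auto
  also have "\<dots> = dag V * (V * U2)" using e by simp
  also have "\<dots> = (dag V * V) * U2" using Vc U2c by (intro assoc_mult_mat[symmetric]) auto
  also have "\<dots> = U2" using dv U2c by simp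
  finally show "U1 = U2" .
qed

lemma G_bij: assumes V: "V \<in> G" shows "bij_betw (\<lambda>U. V * U) G G"
proof -
  have "(\<lambda>U. V * U) ` G = G" using endo_inj_surj[OF finG _ G_inj[OF V]] mult V by auto
  then show ?thesis using G_inj[OF V] by (simp add: bij_betw_def)
qed

lemma conj_twirl: assumes V: "V \<in> G" and A: "A \<in> carrier_mat d d"
  shows "V * twirl d G A * dag V = twirl d G A"
proof (rule eq_matI)
  have Vc: "V \<in> carrier_mat d d" using G_carrier V .
  fix r s assume "r < dim_row (twirl d G A)" "s < dim_col (twirl d G A)"
  then have r: "r < d" and s: "s < d" by auto
  define c where "c = 1 / (of_nat (card G) :: complex)"
  let ?h = "\<lambda>U p q. (U * A * dag U) $$ (p,q)"
  have "(V * twirl d G A * dag V) $$ (r,s) = (\<Sum>p<d. \<Sum>q<d. V $$ (r,p) * twirl d G A $$ (p,q) * cnj (V $$ (s,q)))"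
    using sandwich[OF Vc twirl_carrier r s] .
  also have "\<dots> = (\<Sum>p<d. \<Sum>q<d. V $$ (r,p) * (c * (\<Sum>U\<in>G. ?h U p q)) * cnj (V $$ (s,q)))"
    by (intro sum.cong refl) (simp add: twirl_def c_def)
  also have "\<dots> = (\<Sum>p<d. \<Sum>q<d. \<Sum>U\<in>G. c * (V $$ (r,p) * ?h U p q * cnj (V $$ (s,q))))"
    by (intro sum.cong refl) (simp add: sum_distrib_left sum_distrib_right ac_simps)
  also have "\<dots> = c * (\<Sum>U\<in>G. \<Sum>p<d. \<Sum>q<d. V $$ (r,p) * ?h U p q * cnj (V $$ (s,q)))"
    by (subst sum3_swap) (simp add: sum_distrib_left)
  also have "\<dots> = c * (\<Sum>U\<in>G. ((V * U) * A * dag (V * U)) $$ (r,s))"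
  proof -
    have "\<And>U. U \<in> G \<Longrightarrow> (\<Sum>p<d. \<Sum>q<d. V $$ (r,p) * ?h U p q * cnj (V $$ (s,q))) = ((V * U) * A * dag (V * U)) $$ (r,s)"
    proof -
      fix U assume U: "U \<in> G"
      have Uc: "U \<in> carrier_mat d d" using G_carrier U .
      have B: "U * A * dag U \<in> carrier_mat d d" using Uc A by auto
      have e1: "(V * U) * A = V * (U * A)" using Uc Vc A by (intro assoc_mult_mat) auto
      have e2: "V * (U * A) * (dag U * dag V) = (V * (U * A) * dag U) * dag V"
        using Uc Vc A by (intro assoc_mult_mat[symmetric]) auto
      have e3: "V * (U * A) * dag U = V * (U * A * dag U)"
        using Uc Vc A by (intro assoc_mult_mat) auto
      have "(V * U) * A * dag (V * U) = V * (U * A * dag U) * dag V"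
        unfolding dag_mult[OF Vc Uc] e1 e2 e3 ..
      then show "(\<Sum>p<d. \<Sum>q<d. V $$ (r,p) * ?h U p q * cnj (V $$ (s,q))) = ((V * U) * A * dag (V * U)) $$ (r,s)"
        using sandwich[OF Vc B r s] by simp
    qed
    then show ?thesis by simp
  qed
  also have "\<dots> = c * (\<Sum>U\<in>G. (U * A * dag U) $$ (r,s))"
    using sum.reindex_bij_betw[OF G_bij[OF V], of "\<lambda>U. (U * A * dag U) $$ (r,s)"] by simp
  also have "\<dots> = twirl d G A $$ (r,s)" using r s by (simp add: twirl_def c_def)
  finally show "(V * twirl d G A * dag V) $$ (r,s) = twirl d G A $$ (r,s)" .
qed (use G_carrier V in auto)

lemma twirl_idem: assumes A: "A \<in> carrier_mat d d"
  shows "twirl d G (twirl d G A) = twirl d G A"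
proof (rule eq_matI)
  fix r s assume "r < dim_row (twirl d G A)" "s < dim_col (twirl d G A)"
  then have r: "r < d" and s: "s < d" by auto
  have "twirl d G (twirl d G A) $$ (r,s) = 1 / of_nat (card G) * (\<Sum>V\<in>G. (V * twirl d G A * dag V) $$ (r,s))"
    using r s by (simp add: twirl_def)
  also have "\<dots> = 1 / of_nat (card G) * (\<Sum>V\<in>G. twirl d G A $$ (r,s))"
    using conj_twirl[OF _ A] by simp
  also have "\<dots> = twirl d G A $$ (r,s)" using card_pos by simp
  finally show "twirl d G (twirl d G A) $$ (r,s) = twirl d G A $$ (r,s)" .
qed auto


definition Wm :: "nat \<Rightarrow> complex mat \<Rightarrow> complex mat" where
  "Wm k U = mat (k*d) (k*d) (\<lambda>(i,a). if i div d = a div d then U $$ (i mod d, a mod d) else 0)"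

lemma Wm_carrier[simp]: "Wm k U \<in> carrier_mat (k*d) (k*d)"
  by (simp add: Wm_def)

lemma id_tensor_entry:
  assumes X: "X \<in> carrier_mat (k*d) (k*d)" and i: "i < k*d" and j: "j < k*d"
  shows "id_tensor k d (twirl d G) X $$ (i,j) = 1 / of_nat (card G) * (\<Sum>U\<in>G. (Wm k U * X * dag (Wm k U)) $$ (i,j))"
proof -
  have dpos: "d > 0" using i by (cases d) auto
  have im: "i mod d < d" and jm: "j mod d < d" using dpos by auto
  have ik: "i div d < k" and jk: "j div d < k" using i j by (auto simp: less_mult_imp_div_less)
  have B: "block d X (i div d) (j div d) \<in> carrier_mat d d" by (simp add: block_def)
  have "id_tensor k d (twirl d G) X $$ (i,j) = twirl d G (block d X (i div d) (j div d)) $$ (i mod d, j mod d)"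
    using i j by (simp add: id_tensor_def)
  also have "\<dots> = 1 / of_nat (card G) * (\<Sum>U\<in>G. \<Sum>p<d. \<Sum>q<d. U $$ (i mod d,p) * X $$ (i div d * d + p, j div d * d + q) * cnj (U $$ (j mod d,q)))"
    using twirl_entry[OF B im jm] by (simp add: block_def)
  also have "\<dots> = 1 / of_nat (card G) * (\<Sum>U\<in>G. (Wm k U * X * dag (Wm k U)) $$ (i,j))"
  proof -
    have "(Wm k U * X * dag (Wm k U)) $$ (i,j) = (\<Sum>p<d. \<Sum>q<d. U $$ (i mod d,p) * X $$ (i div d * d + p, j div d * d + q) * cnj (U $$ (j mod d,q)))"
      if U: "U \<in> G" for U
    proof -
      have "(Wm k U * X * dag (Wm k U)) $$ (i,j) = (\<Sum>a<k*d. \<Sum>b<k*d. Wm k U $$ (i,a) * X $$ (a,b) * cnj (Wm k U $$ (j,b)))"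
        using sandwich[OF Wm_carrier X i j] .
      also have "\<dots> = (\<Sum>a<k*d. (if i div d = a div d then U $$ (i mod d, a mod d) else 0) *
            (\<Sum>b<k*d. (if j div d = b div d then cnj (U $$ (j mod d, b mod d)) else 0) * X $$ (a,b)))"
        using i j by (auto simp: Wm_def sum_distrib_left ac_simps intro!: sum.cong)
      also have "\<dots> = (\<Sum>a<k*d. (if i div d = a div d then U $$ (i mod d, a mod d) else 0) *
            (\<Sum>q<d. cnj (U $$ (j mod d, q)) * X $$ (a, j div d * d + q)))"
        using block_sum[OF j, of "\<lambda>b. cnj (U $$ (j mod d, b))"] by simp
      also have "\<dots> = (\<Sum>p<d. U $$ (i mod d, p) * (\<Sum>q<d. cnj (U $$ (j mod d, q)) * X $$ (i div d * d + p, j div d * d + q)))"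
        using block_sum[OF i, of "\<lambda>a. U $$ (i mod d, a)" "\<lambda>a. (\<Sum>q<d. cnj (U $$ (j mod d, q)) * X $$ (a, j div d * d + q))"] by simp
      also have "\<dots> = (\<Sum>p<d. \<Sum>q<d. U $$ (i mod d,p) * X $$ (i div d * d + p, j div d * d + q) * cnj (U $$ (j mod d,q)))"
        by (simp add: sum_distrib_left ac_simps)
      finally show ?thesis .
    qed
    then show ?thesis by simp
  qed
  finally show ?thesis .
qed

lemma twirl_CP: assumes X: "psd (k*d) X"
  shows "psd (k*d) (id_tensor k d (twirl d G) X)"
proof -
  let ?Y = "id_tensor k d (twirl d G) X"
  let ?n = "k*d"
  let ?Z = "\<lambda>U. Wm k U * X * dag (Wm k U)"
  have Xc: "X \<in> carrier_mat ?n ?n" using X by (simp add: psd_def)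
  have Zp: "\<And>U. psd ?n (?Z U)" using psd_sandwich[OF X Wm_carrier] .
  have Zc: "\<And>U. ?Z U \<in> carrier_mat ?n ?n" using Zp by (simp add: psd_def)
  have Yc: "?Y \<in> carrier_mat ?n ?n" by (simp add: id_tensor_def)
  have Ye: "\<And>i j. i < ?n \<Longrightarrow> j < ?n \<Longrightarrow> ?Y $$ (i,j) = 1 / of_nat (card G) * (\<Sum>U\<in>G. ?Z U $$ (i,j))"
    using id_tensor_entry[OF Xc] by blast
  have h: "dag ?Y = ?Y"
  proof (rule eq_matI)
    fix i j assume "i < dim_row ?Y" "j < dim_col ?Y"
    then have i: "i < ?n" and j: "j < ?n" using Yc by auto
    have "dag ?Y $$ (i,j) = cnj (?Y $$ (j,i))" using dag_entry[OF Yc i j] .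
    also have "\<dots> = 1 / of_nat (card G) * (\<Sum>U\<in>G. cnj (?Z U $$ (j,i)))" using Ye[OF j i] by simp
    also have "\<dots> = 1 / of_nat (card G) * (\<Sum>U\<in>G. ?Z U $$ (i,j))"
      using herm_entry[OF _ Zc i j] Zp by (simp add: psd_def)
    also have "\<dots> = ?Y $$ (i,j)" using Ye[OF i j] by simp
    finally show "dag ?Y $$ (i,j) = ?Y $$ (i,j)" .
  qed (use Yc in auto)
  have p: "0 \<le> Re (conjugate v \<bullet> (?Y *\<^sub>v v))" if v: "v \<in> carrier_vec ?n" for v
  proof -
    have "conjugate v \<bullet> (?Y *\<^sub>v v) = (\<Sum>i<?n. \<Sum>j<?n. cnj (v$i) * ?Y$$(i,j) * v$j)"
      using quad_eq[OF Yc v] .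
    also have "\<dots> = (\<Sum>i<?n. \<Sum>j<?n. \<Sum>U\<in>G. 1 / of_nat (card G) * (cnj (v$i) * ?Z U $$(i,j) * v$j))"
      using Ye by (auto simp: sum_distrib_left sum_distrib_right ac_simps intro!: sum.cong)
    also have "\<dots> = 1 / of_nat (card G) * (\<Sum>U\<in>G. \<Sum>i<?n. \<Sum>j<?n. cnj (v$i) * ?Z U $$(i,j) * v$j)"
      by (subst sum3_swap) (simp add: sum_distrib_left)
    also have "\<dots> = (\<Sum>U\<in>G. conjugate v \<bullet> (?Z U *\<^sub>v v)) / of_nat (card G)"
      using quad_eq[OF Zc v] by simp
    finally have e: "conjugate v \<bullet> (?Y *\<^sub>v v) = (\<Sum>U\<in>G. conjugate v \<bullet> (?Z U *\<^sub>v v)) / of_nat (card G)" .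
    have "\<And>U. 0 \<le> Re (conjugate v \<bullet> (?Z U *\<^sub>v v))" using Zp v by (simp add: psd_def)
    then have "0 \<le> (\<Sum>U\<in>G. Re (conjugate v \<bullet> (?Z U *\<^sub>v v)))" by (simp add: sum_nonneg)
    then show ?thesis unfolding e by (simp add: Re_sum)
  qed
  show ?thesis using Yc h p by (simp add: psd_def)
qed

lemma id_tensor_one: assumes A: "A \<in> carrier_mat d d"
  shows "id_tensor 1 d (twirl d G) A = twirl d G A"
proof (rule eq_matI)
  fix i j assume "i < dim_row (twirl d G A)" "j < dim_col (twirl d G A)"
  then have i: "i < d" and j: "j < d" by auto
  have "block d A (i div d) (j div d) = A" using i j A by (auto simp: block_def intro!: eq_matI)
  then show "id_tensor 1 d (twirl d G) A $$ (i,j) = twirl d G A $$ (i,j)"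
    using i j by (simp add: id_tensor_def)
qed (auto simp: id_tensor_def)

lemma twirl_psd: "psd d A \<Longrightarrow> psd d (twirl d G A)"
  using twirl_CP[of 1 A] id_tensor_one[of A] by (simp add: psd_def)

lemma twirl_density: "\<rho> \<in> density_ops d \<Longrightarrow> twirl d G \<rho> \<in> density_ops d"
  using twirl_psd twirl_trace by (auto simp: density_ops_def psd_def)


lemma twirl_fun:
  assumes A: "finite A" and f: "\<And>x. x \<in> A \<Longrightarrow> f x \<in> carrier_mat d d"
    and M: "M \<in> carrier_mat d d"
    and Me: "\<And>p q. p < d \<Longrightarrow> q < d \<Longrightarrow> M $$ (p,q) = (\<Sum>x\<in>A. c x * f x $$ (p,q))"
    and r: "r < d" and s: "s < d"
  shows "twirl d G M $$ (r,s) = (\<Sum>x\<in>A. c x * twirl d G (f x) $$ (r,s))"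
proof -
  define cc where "cc = 1 / (of_nat (card G) :: complex)"
  have "twirl d G M $$ (r,s) = cc * (\<Sum>U\<in>G. \<Sum>p<d. \<Sum>q<d. U $$ (r,p) * M $$ (p,q) * cnj (U $$ (s,q)))"
    using twirl_entry[OF M r s] by (simp add: cc_def)
  also have "\<dots> = cc * (\<Sum>U\<in>G. \<Sum>p<d. \<Sum>q<d. \<Sum>x\<in>A. c x * (U $$ (r,p) * f x $$ (p,q) * cnj (U $$ (s,q))))"
    using Me by (simp add: sum_distrib_left sum_distrib_right ac_simps)
  also have "\<dots> = cc * (\<Sum>U\<in>G. \<Sum>x\<in>A. \<Sum>p<d. \<Sum>q<d. c x * (U $$ (r,p) * f x $$ (p,q) * cnj (U $$ (s,q))))"
    by (subst sum3_swap) (rule refl)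
  also have "\<dots> = cc * (\<Sum>x\<in>A. \<Sum>U\<in>G. \<Sum>p<d. \<Sum>q<d. c x * (U $$ (r,p) * f x $$ (p,q) * cnj (U $$ (s,q))))"
    by (subst sum.swap) (rule refl)
  also have "\<dots> = (\<Sum>x\<in>A. c x * (cc * (\<Sum>U\<in>G. \<Sum>p<d. \<Sum>q<d. U $$ (r,p) * f x $$ (p,q) * cnj (U $$ (s,q)))))"
    by (simp add: sum_distrib_left ac_simps)
  also have "\<dots> = (\<Sum>x\<in>A. c x * twirl d G (f x) $$ (r,s))"
    using twirl_entry[OF f r s] by (simp add: cc_def)
  finally show ?thesis .
qed

abbreviation "FF \<equiv> twirl d G ` density_ops d"

lemma FF_fix: "\<sigma> \<in> FF \<Longrightarrow> twirl d G \<sigma> = \<sigma>"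
  using twirl_idem by (auto simp: density_ops_def psd_def)

lemma FF_density: "\<sigma> \<in> FF \<Longrightarrow> \<sigma> \<in> density_ops d"
  using twirl_density by auto

lemma part1: "affine_set d FF"
  unfolding affine_set_def
proof (rule equalityI)
  show "Aff d FF \<subseteq> FF"
  proof
    fix \<rho> assume "\<rho> \<in> Aff d FF"
    then have "\<rho> \<in> density_ops d \<and> (\<exists>A t. finite A \<and> A \<subseteq> FF \<and> (\<Sum>\<sigma>\<in>A. t \<sigma>) = (1::real) \<and>
       \<rho> = mat d d (\<lambda>ij. \<Sum>\<sigma>\<in>A. complex_of_real (t \<sigma>) * \<sigma> $$ ij))"
      unfolding Aff_def by (rule CollectD)
    then obtain A t where \<rho>: "\<rho> \<in> density_ops d" and A: "finite A" "A \<subseteq> FF"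
      and e: "\<rho> = mat d d (\<lambda>ij. \<Sum>\<sigma>\<in>A. complex_of_real (t \<sigma>) * \<sigma> $$ ij)"
      by (elim conjE exE) 
    have \<rho>c: "\<rho> \<in> carrier_mat d d" using \<rho> by (simp add: density_ops_def psd_def)
    have "twirl d G \<rho> = \<rho>"
    proof (rule eq_matI)
      fix r s assume "r < dim_row \<rho>" "s < dim_col \<rho>"
      then have r: "r < d" and s: "s < d" using \<rho>c by auto
      have "twirl d G \<rho> $$ (r,s) = (\<Sum>\<sigma>\<in>A. complex_of_real (t \<sigma>) * twirl d G \<sigma> $$ (r,s))"
      proof (rule twirl_fun[OF A(1) _ \<rho>c _ r s, where f = "\<lambda>x. x"])
        fix x assume "x \<in> A" then show "x \<in> carrier_mat d d" using A(2) by auto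
      next
        fix p q assume "p < d" "q < d"
        then show "\<rho> $$ (p,q) = (\<Sum>x\<in>A. complex_of_real (t x) * x $$ (p,q))"
          by (subst e) simp
      qed
      also have "\<dots> = (\<Sum>\<sigma>\<in>A. complex_of_real (t \<sigma>) * \<sigma> $$ (r,s))"
      proof (intro sum.cong refl)
        fix \<sigma> assume "\<sigma> \<in> A"
        then have "\<sigma> \<in> FF" using A(2) by blast
        then have "twirl d G \<sigma> = \<sigma>" by (rule FF_fix)
        then show "complex_of_real (t \<sigma>) * twirl d G \<sigma> $$ (r,s) = complex_of_real (t \<sigma>) * \<sigma> $$ (r,s)" by simp
      qed
      also have "\<dots> = \<rho> $$ (r,s)" using r s e by simp
      finally show "twirl d G \<rho> $$ (r,s) = \<rho> $$ (r,s)" .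
    next show "dim_row (twirl d G \<rho>) = dim_row \<rho>" using \<rho>c by simp
    next show "dim_col (twirl d G \<rho>) = dim_col \<rho>" using \<rho>c by simp
    qed
    moreover have "twirl d G \<rho> \<in> FF" using \<rho> by (rule imageI)
    ultimately show "\<rho> \<in> FF" by simp
  qed
  show "FF \<subseteq> Aff d FF"
  proof
    fix \<sigma> assume \<sigma>: "\<sigma> \<in> FF"
    have "\<sigma> = mat d d (\<lambda>ij. \<Sum>x\<in>{\<sigma>}. complex_of_real ((\<lambda>_. 1) x) * x $$ ij)"
    proof -
      have "\<sigma> \<in> carrier_mat d d" using \<sigma> by auto
      then show ?thesis by (auto intro!: eq_matI)
    qed
    moreover have "finite {\<sigma>}" "{\<sigma>} \<subseteq> FF" "(\<Sum>x\<in>{\<sigma>}. (\<lambda>_. 1::real) x) = 1" using \<sigma> by auto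
    ultimately have "\<exists>A t. finite A \<and> A \<subseteq> FF \<and> (\<Sum>\<sigma>\<in>A. t \<sigma>) = (1::real) \<and>
       \<sigma> = mat d d (\<lambda>ij. \<Sum>\<sigma>\<in>A. complex_of_real (t \<sigma>) * \<sigma> $$ ij)"
      by (intro exI[of _ "{\<sigma>}"] exI[of _ "\<lambda>_. 1::real"] conjI)
    with FF_density[OF \<sigma>] have "\<sigma> \<in> density_ops d \<and> (\<exists>A t. finite A \<and> A \<subseteq> FF \<and> (\<Sum>\<sigma>\<in>A. t \<sigma>) = (1::real) \<and>
       \<sigma> = mat d d (\<lambda>ij. \<Sum>\<sigma>\<in>A. complex_of_real (t \<sigma>) * \<sigma> $$ ij))" by (rule conjI)
    then show "\<sigma> \<in> Aff d FF" unfolding Aff_def mem_Collect_eq .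
  qed
qed

lemma part2: "resource_destroying d FF (twirl d G)"
proof -
  have lin: "linear_map d (twirl d G)"
    unfolding linear_map_def
  proof (intro conjI ballI allI)
    fix A :: "complex mat" assume "A \<in> carrier_mat d d" then show "twirl d G A \<in> carrier_mat d d" by simp
  next
    fix A B :: "complex mat" assume "A \<in> carrier_mat d d" "B \<in> carrier_mat d d"
    then show "twirl d G (A + B) = twirl d G A + twirl d G B" by (rule twirl_add)
  next
    fix A :: "complex mat" and c :: complex assume "A \<in> carrier_mat d d"
    then show "twirl d G (c \<cdot>\<^sub>m A) = c \<cdot>\<^sub>m twirl d G A" by (rule twirl_smult)
  qed
  have cp: "\<forall>k X. psd (k*d) X \<longrightarrow> psd (k*d) (id_tensor k d (twirl d G) X)"
    using twirl_CP by blast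
  have tp: "\<forall>A \<in> carrier_mat d d. tr (twirl d G A) = tr A" using twirl_trace by blast
  have "CPTP d (twirl d G)" unfolding CPTP_def using lin cp tp by (intro conjI)
  moreover have "\<forall>\<rho> \<in> density_ops d. twirl d G \<rho> \<in> FF" by blast
  moreover have "\<forall>\<sigma> \<in> FF. twirl d G \<sigma> = \<sigma>" using FF_fix by blast
  ultimately show ?thesis unfolding resource_destroying_def by (intro conjI)
qed


definition R1 :: "real \<Rightarrow> (nat \<Rightarrow> complex) \<Rightarrow> complex mat" where
  "R1 c w = mat d d (\<lambda>(p,q). complex_of_real c * (w p * cnj (w q)))"

lemma R1_psd: assumes c: "c \<ge> 0" shows "psd d (R1 c w)"
proof -
  have Rc: "R1 c w \<in> carrier_mat d d" by (simp add: R1_def)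
  have h: "dag (R1 c w) = R1 c w" by (auto simp: R1_def dag_def intro!: eq_matI)
  have p: "0 \<le> Re (conjugate v \<bullet> (R1 c w *\<^sub>v v))" if v: "v \<in> carrier_vec d" for v
  proof -
    define z where "z = (\<Sum>i<d. cnj (v$i) * w i)"
    have "conjugate v \<bullet> (R1 c w *\<^sub>v v) = (\<Sum>i<d. \<Sum>j<d. cnj (v$i) * R1 c w $$ (i,j) * v$j)"
      using quad_eq[OF Rc v] .
    also have "\<dots> = (\<Sum>i<d. \<Sum>j<d. complex_of_real c * ((cnj (v$i) * w i) * (cnj (w j) * v$j)))"
      by (intro sum.cong refl) (simp add: R1_def ac_simps)
    also have "\<dots> = complex_of_real c * (z * cnj z)"
      by (subst sum.swap) (simp add: z_def sum_product sum_distrib_left cnj_sum ac_simps)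
    also have "\<dots> = complex_of_real (c * (cmod z)\<^sup>2)"
    proof -
      have "z * cnj z = complex_of_real ((cmod z)^2)" by (rule complex_norm_square[symmetric])
      then show ?thesis by (simp only: of_real_mult)
    qed
    finally show ?thesis using c by simp
  qed
  show ?thesis using Rc h p by (simp add: psd_def)
qed

lemma R1_density: assumes c: "c \<ge> 0" and t: "(\<Sum>p<d. complex_of_real c * (w p * cnj (w p))) = 1"
  shows "R1 c w \<in> density_ops d"
  using R1_psd[OF c] t by (simp add: density_ops_def tr_def R1_def)

lemma E_comb: assumes a: "a < d" and b: "b < d"
  shows "isComb d (density_ops d) (\<lambda>i j. if i = a \<and> j = b then 1 else 0)"
proof -
  let ?ea = "\<lambda>p. if p = a then 1 else (0::complex)"
  let ?eb = "\<lambda>p. if p = b then 1 else (0::complex)"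
  have Ea: "R1 1 ?ea \<in> density_ops d"
  proof (rule R1_density)
    have "(\<Sum>p<d. complex_of_real 1 * (?ea p * cnj (?ea p))) = (\<Sum>p<d. if p = a then 1 else 0)"
      by (intro sum.cong refl) auto
    then show "(\<Sum>p<d. complex_of_real 1 * (?ea p * cnj (?ea p))) = 1" using a by simp
  qed simp
  have Eb: "R1 1 ?eb \<in> density_ops d"
  proof (rule R1_density)
    have "(\<Sum>p<d. complex_of_real 1 * (?eb p * cnj (?eb p))) = (\<Sum>p<d. if p = b then 1 else 0)"
      by (intro sum.cong refl) auto
    then show "(\<Sum>p<d. complex_of_real 1 * (?eb p * cnj (?eb p))) = 1" using b by simp
  qed simp
  show ?thesis
  proof (cases "a = b")
    case True
    show ?thesis unfolding isComb_def
      by (rule exI[of _ "[(1, R1 1 ?ea)]"]) (use Ea True in \<open>auto simp: R1_def\<close>)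
  next
    case False
    let ?u = "\<lambda>p. if p = a then 1 else if p = b then 1 else (0::complex)"
    let ?w = "\<lambda>p. if p = a then 1 else if p = b then - \<i> else (0::complex)"
    have Pu: "R1 (1/2) ?u \<in> density_ops d"
    proof (rule R1_density)
      have "(\<Sum>p<d. complex_of_real (1/2) * (?u p * cnj (?u p))) = (\<Sum>p<d. if p = a then 1/2 else if p = b then 1/2 else 0)"
        by (intro sum.cong refl) auto
      also have "\<dots> = 1" using sum_two[OF False a b, of "1/2::complex" "1/2"] by simp
      finally show "(\<Sum>p<d. complex_of_real (1/2) * (?u p * cnj (?u p))) = 1" .
    qed simp
    have Pw: "R1 (1/2) ?w \<in> density_ops d"
    proof (rule R1_density)
      have "(\<Sum>p<d. complex_of_real (1/2) * (?w p * cnj (?w p))) = (\<Sum>p<d. if p = a then 1/2 else if p = b then 1/2 else 0)"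
        using False by (intro sum.cong refl) auto
      also have "\<dots> = 1" using sum_two[OF False a b, of "1/2::complex" "1/2"] by simp
      finally show "(\<Sum>p<d. complex_of_real (1/2) * (?w p * cnj (?w p))) = 1" .
    qed simp
    let ?ps = "[(1, R1 (1/2) ?u), (- \<i>, R1 (1/2) ?w), (- (1 - \<i>)/2, R1 1 ?ea), (- (1 - \<i>)/2, R1 1 ?eb)]"
    show ?thesis unfolding isComb_def
    proof (intro exI[of _ ?ps] conjI allI impI)
      show "set (map snd ?ps) \<subseteq> density_ops d" using Pu Pw Ea Eb by simp
    next
      fix i j assume i: "i < d" and j: "j < d"
      show "(if i = a \<and> j = b then 1 else 0) = (\<Sum>p\<leftarrow>?ps. fst p * snd p $$ (i,j))"
        using i j False by (auto simp: R1_def field_simps)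
    qed
  qed
qed

lemma twirl_list:
  assumes f: "set (map snd ps) \<subseteq> carrier_mat d d"
    and M: "M \<in> carrier_mat d d"
    and Me: "\<And>p q. p < d \<Longrightarrow> q < d \<Longrightarrow> M $$ (p,q) = (\<Sum>x\<leftarrow>ps. fst x * snd x $$ (p,q))"
    and r: "r < d" and s: "s < d"
  shows "twirl d G M $$ (r,s) = (\<Sum>x\<leftarrow>ps. fst x * twirl d G (snd x) $$ (r,s))"
proof -
  have "twirl d G M $$ (r,s) = (\<Sum>k\<in>{..<length ps}. fst (ps!k) * twirl d G (snd (ps!k)) $$ (r,s))"
  proof (rule twirl_fun[OF _ _ M _ r s])
    fix k assume "k \<in> {..<length ps}" then show "snd (ps!k) \<in> carrier_mat d d" using f by auto
  next
    fix p q assume "p < d" "q < d"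
    then show "M $$ (p,q) = (\<Sum>k\<in>{..<length ps}. fst (ps!k) * snd (ps!k) $$ (p,q))"
      using Me sum_list_idx[of "\<lambda>x. fst x * snd x $$ (p,q)" ps] by simp
  qed simp
  then show ?thesis using sum_list_idx[of "\<lambda>x. fst x * twirl d G (snd x) $$ (r,s)" ps] by simp
qed

definition twE :: "nat \<Rightarrow> nat \<Rightarrow> nat \<Rightarrow> nat \<Rightarrow> complex" where
  "twE a b r s = 1 / of_nat (card G) * (\<Sum>U\<in>G. U $$ (r,a) * cnj (U $$ (s,b)))"

lemma twE_comb: assumes a: "a < d" and b: "b < d"
  shows "isComb d FF (twE a b)"
proof -
  obtain ps where ps: "set (map snd ps) \<subseteq> density_ops d"
    "\<forall>i<d. \<forall>j<d. (if i = a \<and> j = b then 1 else 0) = (\<Sum>p\<leftarrow>ps. fst p * snd p $$ (i,j))"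
    using E_comb[OF a b] unfolding isComb_def by blast
  define Em where "Em = mat d d (\<lambda>(p,q). if p = a \<and> q = b then 1 else (0::complex))"
  have Emc: "Em \<in> carrier_mat d d" by (simp add: Em_def)
  have f: "set (map snd ps) \<subseteq> carrier_mat d d" using ps(1) by (auto simp: density_ops_def psd_def)
  let ?qs = "map (\<lambda>x. (fst x, twirl d G (snd x))) ps"
  show ?thesis unfolding isComb_def
  proof (intro exI[of _ ?qs] conjI allI impI)
    show "set (map snd ?qs) \<subseteq> FF" using ps(1) by auto
  next
    fix r s assume r: "r < d" and s: "s < d"
    have "twE a b r s = twirl d G Em $$ (r,s)"
      using twirl_entry[OF Emc r s] sum_delta2[OF a b, of "\<lambda>p q. _ $$ (r,p)" "\<lambda>p q. cnj (_ $$ (s,q))"]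
      by (simp add: twE_def Em_def)
    also have "\<dots> = (\<Sum>x\<leftarrow>ps. fst x * twirl d G (snd x) $$ (r,s))"
      by (rule twirl_list[OF f Emc _ r s]) (use ps(2) in \<open>simp add: Em_def\<close>)
    finally show "twE a b r s = (\<Sum>p\<leftarrow>?qs. fst p * snd p $$ (r,s))" by (simp add: o_def)
  qed
qed


definition LL :: "nat \<Rightarrow> complex mat list set" where
  "LL N = {Us. length Us = N \<and> set Us \<subseteq> G}"

lemma LL_finite: "finite (LL N)"
proof -
  have "LL N = {xs. set xs \<subseteq> G \<and> length xs = N}" by (auto simp: LL_def)
  then show ?thesis using finite_lists_length_eq[OF finG] by simp
qed

lemma LL_0: "LL 0 = {[]}" by (auto simp: LL_def)

lemma LL_Suc: "LL (Suc N) = (\<lambda>(U,Us). U # Us) ` (G \<times> LL N)"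
proof
  show "LL (Suc N) \<subseteq> (\<lambda>(U,Us). U # Us) ` (G \<times> LL N)"
  proof
    fix xs assume "xs \<in> LL (Suc N)"
    then obtain y ys where "xs = y # ys" "length ys = N" "set (y # ys) \<subseteq> G"
      unfolding LL_def by (auto simp: length_Suc_conv)
    then show "xs \<in> (\<lambda>(U,Us). U # Us) ` (G \<times> LL N)" by (auto simp: LL_def image_iff)
  qed
qed (auto simp: LL_def)

lemma sum_LL_Suc: "(\<Sum>Us\<in>LL (Suc N). h Us) = (\<Sum>U\<in>G. \<Sum>Us\<in>LL N. h (U # Us))"
proof -
  have inj: "inj_on (\<lambda>(U,Us). U # Us) (G \<times> LL N)" by (auto simp: inj_on_def)
  have "(\<Sum>Us\<in>LL (Suc N). h Us) = (\<Sum>x\<in>G \<times> LL N. h ((\<lambda>(U,Us). U # Us) x))"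
    unfolding LL_Suc using sum.reindex[OF inj, of h] by (simp add: o_def)
  also have "\<dots> = (\<Sum>U\<in>G. \<Sum>Us\<in>LL N. h (U # Us))"
    by (simp add: sum.cartesian_product split_def)
  finally show ?thesis .
qed

lemma LL_carrier: "Us \<in> LL N \<Longrightarrow> kron_list Us \<in> carrier_mat (d^N) (d^N)"
  using kron_list_carrier[of Us d] G_carrier by (auto simp: LL_def)

lemma TT_entry: assumes X: "X \<in> carrier_mat (d^N) (d^N)" and i: "i < d^N" and j: "j < d^N"
  shows "twirl_tensor d G N X $$ (i,j) = 1 / of_nat (card G ^ N) *
    (\<Sum>Us\<in>LL N. \<Sum>a<d^N. \<Sum>b<d^N. kron_list Us $$ (i,a) * X $$ (a,b) * cnj (kron_list Us $$ (j,b)))"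
proof -
  have "twirl_tensor d G N X $$ (i,j) = 1 / of_nat (card G ^ N) *
     (\<Sum>Us\<in>LL N. (kron_list Us * X * dag (kron_list Us)) $$ (i,j))"
    using i j by (simp add: twirl_tensor_def LL_def)
  also have "\<dots> = 1 / of_nat (card G ^ N) *
    (\<Sum>Us\<in>LL N. \<Sum>a<d^N. \<Sum>b<d^N. kron_list Us $$ (i,a) * X $$ (a,b) * cnj (kron_list Us $$ (j,b)))"
    using sandwich[OF LL_carrier X i j] by simp
  finally show ?thesis .
qed


lemma TT_inner:
  assumes U: "U \<in> G" and Us: "Us \<in> LL N" and i: "i < d * d^N" and j: "j < d * d^N"
  shows "(\<Sum>a<d * d^N. \<Sum>b<d * d^N. kron U (kron_list Us) $$ (i,a) * X $$ (a,b) * cnj (kron U (kron_list Us) $$ (j,b))) =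
    (\<Sum>a1<d. \<Sum>b1<d. \<Sum>a2<d^N. \<Sum>b2<d^N.
       (U $$ (i div d^N, a1) * cnj (U $$ (j div d^N, b1))) *
       (kron_list Us $$ (i mod d^N, a2) * X $$ (a1 * d^N + a2, b1 * d^N + b2) * cnj (kron_list Us $$ (j mod d^N, b2))))"
proof -
  let ?D = "d^N"
  let ?K = "kron_list Us"
  let ?g = "\<lambda>a b. kron U ?K $$ (i,a) * X $$ (a,b) * cnj (kron U ?K $$ (j,b))"
  have Uc: "U \<in> carrier_mat d d" using G_carrier U .
  have Kc: "?K \<in> carrier_mat ?D ?D" using LL_carrier Us .
  have dims: "dim_row U = d" "dim_col U = d" "dim_row ?K = ?D" "dim_col ?K = ?D" using Uc Kc by auto
  have "(\<Sum>a<d * ?D. \<Sum>b<d * ?D. ?g a b) = (\<Sum>a1<d. \<Sum>a2<?D. \<Sum>b<d * ?D. ?g (a1 * ?D + a2) b)"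
    by (rule sum_mult_reindex)
  also have "\<dots> = (\<Sum>a1<d. \<Sum>a2<?D. \<Sum>b1<d. \<Sum>b2<?D. ?g (a1 * ?D + a2) (b1 * ?D + b2))"
    by (rule sum.cong[OF refl], rule sum.cong[OF refl], rule sum_mult_reindex)
  also have "\<dots> = (\<Sum>a1<d. \<Sum>b1<d. \<Sum>a2<?D. \<Sum>b2<?D. ?g (a1 * ?D + a2) (b1 * ?D + b2))"
    by (rule sum.cong[OF refl], rule sum.swap)
  also have "\<dots> = (\<Sum>a1<d. \<Sum>b1<d. \<Sum>a2<?D. \<Sum>b2<?D.
       (U $$ (i div ?D, a1) * cnj (U $$ (j div ?D, b1))) *
       (?K $$ (i mod ?D, a2) * X $$ (a1 * ?D + a2, b1 * ?D + b2) * cnj (?K $$ (j mod ?D, b2))))"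
  proof (intro sum.cong refl)
    fix a1 b1 a2 b2 assume a1: "a1 \<in> {..<d}" and b1: "b1 \<in> {..<d}" and a2: "a2 \<in> {..<?D}" and b2: "b2 \<in> {..<?D}"
    have ia: "a1 * ?D + a2 < d * ?D" and ib: "b1 * ?D + b2 < d * ?D" using a1 a2 b1 b2 mult_idx_less by auto
    have e1: "kron U ?K $$ (i, a1 * ?D + a2) = U $$ (i div ?D, a1) * ?K $$ (i mod ?D, a2)"
      using kron_entry[of i U ?K "a1 * ?D + a2"] i ia a2 dims by (simp add: div_mod_idx1 div_mod_idx2)
    have e2: "kron U ?K $$ (j, b1 * ?D + b2) = U $$ (j div ?D, b1) * ?K $$ (j mod ?D, b2)"
      using kron_entry[of j U ?K "b1 * ?D + b2"] j ib b2 dims by (simp add: div_mod_idx1 div_mod_idx2)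
    show "?g (a1 * ?D + a2) (b1 * ?D + b2) = (U $$ (i div ?D, a1) * cnj (U $$ (j div ?D, b1))) *
       (?K $$ (i mod ?D, a2) * X $$ (a1 * ?D + a2, b1 * ?D + b2) * cnj (?K $$ (j mod ?D, b2)))"
      unfolding e1 e2 by (simp add: ac_simps)
  qed
  finally show ?thesis .
qed

lemma TT_Suc:
  assumes X: "X \<in> carrier_mat (d * d^N) (d * d^N)" and i: "i < d * d^N" and j: "j < d * d^N"
  shows "twirl_tensor d G (Suc N) X $$ (i,j) = (\<Sum>a1<d. \<Sum>b1<d. twE a1 b1 (i div d^N) (j div d^N) *
      twirl_tensor d G N (block (d^N) X a1 b1) $$ (i mod d^N, j mod d^N))"
proof -
  let ?D = "d^N"
  let ?K = "\<lambda>Us. kron_list Us"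
  let ?P = "\<lambda>U a1 b1. U $$ (i div ?D, a1) * cnj (U $$ (j div ?D, b1))"
  let ?Q = "\<lambda>Us a1 b1 a2 b2. ?K Us $$ (i mod ?D, a2) * X $$ (a1 * ?D + a2, b1 * ?D + b2) * cnj (?K Us $$ (j mod ?D, b2))"
  have Dpos: "?D > 0" using i by (metis mult_0_right not_less_zero gr0I)
  have iD: "i div ?D < d" "i mod ?D < ?D" and jD: "j div ?D < d" "j mod ?D < ?D"
    using i j Dpos by (auto simp: less_mult_imp_div_less mult.commute[of d])
  have XS: "X \<in> carrier_mat (d^Suc N) (d^Suc N)" and iS: "i < d^Suc N" and jS: "j < d^Suc N" using X i j by auto
  have cc: "1 / of_nat (card G ^ Suc N) = 1 / of_nat (card G) * (1 / (of_nat (card G ^ N) :: complex))" by simp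
  have "twirl_tensor d G (Suc N) X $$ (i,j) = 1 / of_nat (card G ^ Suc N) *
    (\<Sum>Us\<in>LL (Suc N). \<Sum>a<d^Suc N. \<Sum>b<d^Suc N. ?K Us $$ (i,a) * X $$ (a,b) * cnj (?K Us $$ (j,b)))"
    using TT_entry[OF XS iS jS] .
  also have "\<dots> = 1 / of_nat (card G ^ Suc N) *
    (\<Sum>U\<in>G. \<Sum>Us\<in>LL N. \<Sum>a<d * ?D. \<Sum>b<d * ?D. kron U (?K Us) $$ (i,a) * X $$ (a,b) * cnj (kron U (?K Us) $$ (j,b)))"
    by (simp add: sum_LL_Suc)
  also have "\<dots> = 1 / of_nat (card G ^ Suc N) *
    (\<Sum>U\<in>G. \<Sum>Us\<in>LL N. \<Sum>a1<d. \<Sum>b1<d. \<Sum>a2<?D. \<Sum>b2<?D. ?P U a1 b1 * ?Q Us a1 b1 a2 b2)"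
    using TT_inner[OF _ _ i j] by simp
  also have "\<dots> = 1 / of_nat (card G ^ Suc N) *
    (\<Sum>a1<d. \<Sum>b1<d. \<Sum>U\<in>G. \<Sum>Us\<in>LL N. \<Sum>a2<?D. \<Sum>b2<?D. ?P U a1 b1 * ?Q Us a1 b1 a2 b2)"
    using sum4_swap[where f = "\<lambda>U Us a1 b1. \<Sum>a2<?D. \<Sum>b2<?D. ?P U a1 b1 * ?Q Us a1 b1 a2 b2" and A = G and B = "LL N" and C = "{..<d}" and E = "{..<d}"]
    by simp
  also have "\<dots> = (\<Sum>a1<d. \<Sum>b1<d. 1 / of_nat (card G ^ Suc N) *
    (\<Sum>U\<in>G. \<Sum>Us\<in>LL N. \<Sum>a2<?D. \<Sum>b2<?D. ?P U a1 b1 * ?Q Us a1 b1 a2 b2))"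
    by (simp add: sum_distrib_left)
  also have "\<dots> = (\<Sum>a1<d. \<Sum>b1<d. (1 / of_nat (card G) * (\<Sum>U\<in>G. ?P U a1 b1)) *
       (1 / of_nat (card G ^ N) * (\<Sum>Us\<in>LL N. \<Sum>a2<?D. \<Sum>b2<?D. ?Q Us a1 b1 a2 b2)))"
  proof (intro sum.cong refl)
    fix a1 b1
    have "(1 / of_nat (card G) * (\<Sum>U\<in>G. ?P U a1 b1)) *
       (1 / of_nat (card G ^ N) * (\<Sum>Us\<in>LL N. \<Sum>a2<?D. \<Sum>b2<?D. ?Q Us a1 b1 a2 b2)) =
       1 / of_nat (card G ^ Suc N) * ((\<Sum>U\<in>G. ?P U a1 b1) * (\<Sum>Us\<in>LL N. \<Sum>a2<?D. \<Sum>b2<?D. ?Q Us a1 b1 a2 b2))"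
      unfolding cc by (simp only: ac_simps)
    also have "\<dots> = 1 / of_nat (card G ^ Suc N) * (\<Sum>U\<in>G. \<Sum>Us\<in>LL N. ?P U a1 b1 * (\<Sum>a2<?D. \<Sum>b2<?D. ?Q Us a1 b1 a2 b2))"
      by (simp only: sum_product)
    also have "\<dots> = 1 / of_nat (card G ^ Suc N) * (\<Sum>U\<in>G. \<Sum>Us\<in>LL N. \<Sum>a2<?D. \<Sum>b2<?D. ?P U a1 b1 * ?Q Us a1 b1 a2 b2)"
      by (simp only: sum_distrib_left)
    finally show "1 / of_nat (card G ^ Suc N) * (\<Sum>U\<in>G. \<Sum>Us\<in>LL N. \<Sum>a2<?D. \<Sum>b2<?D. ?P U a1 b1 * ?Q Us a1 b1 a2 b2) =
      (1 / of_nat (card G) * (\<Sum>U\<in>G. ?P U a1 b1)) *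
       (1 / of_nat (card G ^ N) * (\<Sum>Us\<in>LL N. \<Sum>a2<?D. \<Sum>b2<?D. ?Q Us a1 b1 a2 b2))" by (rule sym)
  qed
  also have "\<dots> = (\<Sum>a1<d. \<Sum>b1<d. twE a1 b1 (i div ?D) (j div ?D) *
      twirl_tensor d G N (block ?D X a1 b1) $$ (i mod ?D, j mod ?D))"
  proof (intro sum.cong refl)
    fix a1 b1 assume a1: "a1 \<in> {..<d}" and b1: "b1 \<in> {..<d}"
    have B: "block ?D X a1 b1 \<in> carrier_mat ?D ?D" by (simp add: block_def)
    have "twirl_tensor d G N (block ?D X a1 b1) $$ (i mod ?D, j mod ?D) =
      1 / of_nat (card G ^ N) * (\<Sum>Us\<in>LL N. \<Sum>a2<?D. \<Sum>b2<?D. ?K Us $$ (i mod ?D, a2) * block ?D X a1 b1 $$ (a2,b2) * cnj (?K Us $$ (j mod ?D, b2)))"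
      using TT_entry[OF B iD(2) jD(2)] .
    also have "\<dots> = 1 / of_nat (card G ^ N) * (\<Sum>Us\<in>LL N. \<Sum>a2<?D. \<Sum>b2<?D. ?Q Us a1 b1 a2 b2)"
      by (simp add: block_def)
    finally show "(1 / of_nat (card G) * (\<Sum>U\<in>G. ?P U a1 b1)) *
       (1 / of_nat (card G ^ N) * (\<Sum>Us\<in>LL N. \<Sum>a2<?D. \<Sum>b2<?D. ?Q Us a1 b1 a2 b2)) =
      twE a1 b1 (i div ?D) (j div ?D) * twirl_tensor d G N (block ?D X a1 b1) $$ (i mod ?D, j mod ?D)"
      by (simp add: twE_def)
  qed
  finally show ?thesis .
qed


lemma FF_props: "FF \<subseteq> {\<sigma> \<in> carrier_mat d d. dag \<sigma> = \<sigma> \<and> tr \<sigma> = 1}"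
proof
  fix \<sigma> assume "\<sigma> \<in> FF"
  then have "\<sigma> \<in> density_ops d" by (rule FF_density)
  then show "\<sigma> \<in> {\<sigma> \<in> carrier_mat d d. dag \<sigma> = \<sigma> \<and> tr \<sigma> = 1}" by (simp add: density_ops_def psd_def)
qed

lemma FF_carrier: "\<sigma> \<in> FF \<Longrightarrow> \<sigma> \<in> carrier_mat d d"
  using FF_props by blast

lemma tp_elem: "\<tau> \<in> tensor_pow N FF \<Longrightarrow> \<exists>\<rho>s. \<tau> = kron_list \<rho>s \<and> length \<rho>s = N \<and> set \<rho>s \<subseteq> FF"
  unfolding tensor_pow_def by (rule CollectD)

lemma tp_carrier: "\<tau> \<in> tensor_pow N FF \<Longrightarrow> \<tau> \<in> carrier_mat (d^N) (d^N)"
proof -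
  assume "\<tau> \<in> tensor_pow N FF"
  then obtain \<rho>s where e: "\<tau> = kron_list \<rho>s" "length \<rho>s = N" "set \<rho>s \<subseteq> FF" using tp_elem by blast
  have "set \<rho>s \<subseteq> carrier_mat d d" using e(3) FF_carrier by blast
  then have "kron_list \<rho>s \<in> carrier_mat (d ^ length \<rho>s) (d ^ length \<rho>s)" by (rule kron_list_carrier)
  then show ?thesis using e by simp
qed

lemma tp_props: "tensor_pow N FF \<subseteq> {\<sigma> \<in> carrier_mat (d^N) (d^N). dag \<sigma> = \<sigma> \<and> tr \<sigma> = 1}"
proof
  fix \<tau> assume t: "\<tau> \<in> tensor_pow N FF"
  then obtain \<rho>s where e: "\<tau> = kron_list \<rho>s" "length \<rho>s = N" "set \<rho>s \<subseteq> FF" using tp_elem by blast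
  have "set \<rho>s \<subseteq> {\<sigma> \<in> carrier_mat d d. dag \<sigma> = \<sigma> \<and> tr \<sigma> = 1}" using e(3) FF_props by (rule subset_trans)
  then have "dag (kron_list \<rho>s) = kron_list \<rho>s \<and> tr (kron_list \<rho>s) = 1" by (rule kron_herm_tr)
  then show "\<tau> \<in> {\<sigma> \<in> carrier_mat (d^N) (d^N). dag \<sigma> = \<sigma> \<and> tr \<sigma> = 1}" using tp_carrier[OF t] e(1) by simp
qed

lemma tp_Suc: "{kron \<sigma> \<tau> | \<sigma> \<tau>. \<sigma> \<in> FF \<and> \<tau> \<in> tensor_pow N FF} \<subseteq> tensor_pow (Suc N) FF"
proof
  fix x assume "x \<in> {kron \<sigma> \<tau> | \<sigma> \<tau>. \<sigma> \<in> FF \<and> \<tau> \<in> tensor_pow N FF}"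
  then obtain \<sigma> \<tau> where x: "x = kron \<sigma> \<tau>" "\<sigma> \<in> FF" "\<tau> \<in> tensor_pow N FF" by blast
  then obtain \<rho>s where e: "\<tau> = kron_list \<rho>s" "length \<rho>s = N" "set \<rho>s \<subseteq> FF" using tp_elem by blast
  have "x = kron_list (\<sigma> # \<rho>s) \<and> length (\<sigma> # \<rho>s) = Suc N \<and> set (\<sigma> # \<rho>s) \<subseteq> FF" using x e by simp
  then have "\<exists>\<rho>s. x = kron_list \<rho>s \<and> length \<rho>s = Suc N \<and> set \<rho>s \<subseteq> FF" by (rule exI)
  then show "x \<in> tensor_pow (Suc N) FF" unfolding tensor_pow_def by (rule CollectI)
qed

lemma TT_comb: "X \<in> carrier_mat (d^N) (d^N) \<Longrightarrow> isComb (d^N) (tensor_pow N FF) (\<lambda>i j. twirl_tensor d G N X $$ (i,j))"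
proof (induction N arbitrary: X)
  case 0
  have one: "1\<^sub>m 1 \<in> tensor_pow 0 FF" unfolding tensor_pow_def
    by (rule CollectI, rule exI[of _ "[]"]) simp
  show ?case unfolding isComb_def
  proof (intro exI[of _ "[(X $$ (0,0), 1\<^sub>m 1)]"] conjI allI impI)
    show "set (map snd [(X $$ (0,0), 1\<^sub>m 1)]) \<subseteq> tensor_pow 0 FF" using one by simp
  next
    fix i j :: nat assume i: "i < d^0" and j: "j < d^0"
    then have "i = 0" "j = 0" by auto
    then show "twirl_tensor d G 0 X $$ (i,j) = (\<Sum>p\<leftarrow>[(X $$ (0,0), 1\<^sub>m 1)]. fst p * snd p $$ (i,j))"
      using TT_entry[OF "0.prems" i j] by (simp add: LL_0)
  qed
next
  case (Suc N)
  let ?D = "d^N"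
  let ?S = "{kron \<sigma> \<tau> | \<sigma> \<tau>. \<sigma> \<in> FF \<and> \<tau> \<in> tensor_pow N FF}"
  have X: "X \<in> carrier_mat (d * ?D) (d * ?D)" using Suc.prems by simp
  have h: "isComb (d * ?D) ?S (\<lambda>i j. twE a1 b1 (i div ?D) (j div ?D) * twirl_tensor d G N (block ?D X a1 b1) $$ (i mod ?D, j mod ?D))"
    if a1: "a1 < d" and b1: "b1 < d" for a1 b1
  proof (rule comb_kron[of FF d "tensor_pow N FF" ?D])
    show "\<And>\<sigma>. \<sigma> \<in> FF \<Longrightarrow> \<sigma> \<in> carrier_mat d d" by (rule FF_carrier)
    show "\<And>\<tau>. \<tau> \<in> tensor_pow N FF \<Longrightarrow> \<tau> \<in> carrier_mat ?D ?D" by (rule tp_carrier)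
    show "isComb d FF (twE a1 b1)" using twE_comb[OF a1 b1] .
    have "block ?D X a1 b1 \<in> carrier_mat ?D ?D" by (simp add: block_def)
    then show "isComb ?D (tensor_pow N FF) (\<lambda>i j. twirl_tensor d G N (block ?D X a1 b1) $$ (i,j))"
      by (rule Suc.IH)
  qed
  have "isComb (d * ?D) ?S (\<lambda>i j. \<Sum>a1\<in>{..<d}. \<Sum>b1\<in>{..<d}. twE a1 b1 (i div ?D) (j div ?D) *
      twirl_tensor d G N (block ?D X a1 b1) $$ (i mod ?D, j mod ?D))"
    by (rule comb_sum, simp, rule comb_sum, simp, rule h) auto
  then have "isComb (d * ?D) (tensor_pow (Suc N) FF) (\<lambda>i j. \<Sum>a1\<in>{..<d}. \<Sum>b1\<in>{..<d}. twE a1 b1 (i div ?D) (j div ?D) *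
      twirl_tensor d G N (block ?D X a1 b1) $$ (i mod ?D, j mod ?D))"
    by (rule comb_mono) (rule tp_Suc)
  then have "isComb (d * ?D) (tensor_pow (Suc N) FF) (\<lambda>i j. twirl_tensor d G (Suc N) X $$ (i,j))"
    by (rule comb_ext) (rule TT_Suc[OF X])
  then show ?case by simp
qed

lemma part3: "\<forall>N \<ge> 1. \<not> (\<exists>\<rho> \<in> density_ops (d ^ N).
              \<rho> \<notin> Aff (d ^ N) (tensor_pow N FF) \<and> twirl_tensor d G N \<rho> = \<rho>)"
proof (intro allI impI notI)
  fix N :: nat
  assume "\<exists>\<rho> \<in> density_ops (d ^ N). \<rho> \<notin> Aff (d ^ N) (tensor_pow N FF) \<and> twirl_tensor d G N \<rho> = \<rho>"
  then obtain \<rho> where \<rho>: "\<rho> \<in> density_ops (d ^ N)" and na: "\<rho> \<notin> Aff (d ^ N) (tensor_pow N FF)"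
    and fx: "twirl_tensor d G N \<rho> = \<rho>" by blast
  have \<rho>c: "\<rho> \<in> carrier_mat (d^N) (d^N)" using \<rho> by (simp add: density_ops_def psd_def)
  have "isComb (d^N) (tensor_pow N FF) (\<lambda>i j. \<rho> $$ (i,j))"
    using TT_comb[OF \<rho>c] fx by simp
  then have "\<rho> \<in> Aff (d ^ N) (tensor_pow N FF)" by (rule comb_Aff[OF \<rho> tp_props])
  then show False using na by simp
qed

end

theorem mainTheorem5:
  fixes d :: nat and G :: "complex mat set"
  assumes finG: "finite G"
    and unit: "\<forall>U \<in> G. unitary d U"
    and one: "1\<^sub>m d \<in> G"
    and mult: "\<forall>U \<in> G. \<forall>V \<in> G. U * V \<in> G"
    and inv: "\<forall>U \<in> G. dag U \<in> G"
  shows "affine_set d (twirl d G ` density_ops d) \<and>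
         resource_destroying d (twirl d G ` density_ops d) (twirl d G) \<and>
         (\<forall>N \<ge> 1. \<not> (\<exists>\<rho> \<in> density_ops (d ^ N).
              \<rho> \<notin> Aff (d ^ N) (tensor_pow N (twirl d G ` density_ops d)) \<and>
              twirl_tensor d G N \<rho> = \<rho>))"
proof -
  interpret grp d G using assms by (unfold_locales) auto
  show ?thesis using part1 part2 part3 by blast
qed

end
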